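(* Assume $f_1$ is $C^3$, $f_2$ is $C^2$, $\frac{D}{\gamma_2\lambda_Z(D)}>f_2'(\lambda_Z(D))$, and let $\mu_{c_2}>\mu_{c_1}(D,D)$ be a zero of $A$. Then there exist $\hat\delta>0$, a neighborhood $\Delta$ of $(D,D)$ and a constant $C$ such that the factor coefficient $\gamma(D_1,D_2)(\mu)$ is defined and differentiable in $\mu$ for $\mu\in[\mu_{c_2}-\hat\delta,\mu_{c_2}+\hat\delta]$, $(D_1,D_2)\in\Delta$, and $$\Bigl|\frac{\partial}{\partial\mu}\gamma(D_1,D_2)(\mu)-A'(\mu)\Bigr|\le C\,\|(D_1,D_2)-(D,D)\|$$ for all such $\mu$ and $(D_1,D_2)$, where $\|\cdot\|$ is the Euclidean norm.
   Context: Let $D,\gamma_1,\gamma_2>0$ and $f_1,f_2:[0,\infty)\to[0,\infty)$ bounded, continuously differentiable, $f_i(0)=0$, $f_i'>0$, with $\lim f_1>d/\gamma_1$, $\lim f_2>d/\gamma_2$ for all $d$ in a neighborhood of $D$. Consider the system $N'=(\mu-N)D-Pf_1(N)$, $P'=\gamma_1Pf_1(N)-D_1P-Zf_2(P)$, $Z'=\gamma_2Zf_2(P)-D_2Z$ with $D_1,D_2>0$. $\lambda_P(d),\lambda_Z(d)$ are defined by $f_1(\lambda_P(d))=d/\gamma_1$, $f_2(\lambda_Z(d))=d/\gamma_2$; $\mu_{c_1}(D_1,D_2)=\lambda_P(D_1)+D_1\lambda_Z(D_2)/(D\gamma_1)$. For $\mu>\mu_{c_1}(D_1,D_2)$, $N(\mu,D_1,D_2)$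 is the unique $N\in(0,\mu)$ with $(\mu-N)D-\lambda_Z(D_2)f_1(N)=0$, $Z(\mu,D_1,D_2)=(\gamma_2/D_2)\lambda_Z(D_2)(\gamma_1f_1(N)-D_1)$, and $E_2(\mu,D_1,D_2)=(N,\lambda_Z(D_2),Z)$. For $D_1=D_2=D$ set $A(\mu)=Z(\mu,D,D)\bigl(\frac{D}{\gamma_2\lambda_Z(D)}-f_2'(\lambda_Z(D))\bigr)-\lambda_Z(D)f_1'(N(\mu,D,D))$. The characteristic polynomial $\det(J-xI)$ of the Jacobian $J$ of the system at $E_2(\mu,D_1,D_2)$ is $p_0+p_1x+p_2x^2-x^3$ with $p_i=p_i(\mu,D_1,D_2)$; for $(D_1,D_2)=(D,D)$ and $\mu$ near $\mu_{c_2}$ it equals $(-D-x)(\beta_0(\mu)-A(\mu)x+x^2)$ with $A(\mu)^2-4\beta_0(\mu)<0$. Let $M:(\alpha,\beta,\gamma)\mapsto(\alpha\beta,-\alpha\gamma-\beta,\alpha+\gamma)$ be the multiplication map sending $(\alpha-x,\ \beta-\gamma x+x^2)$ (with $\alpha<0$, $\gamma^2-4\beta<0$) to the coefficients of their product; it is a local diffeomorphism. For $(\mu,D_1,D_2)$ near $(\mu_{c_2},D,D)$ define $(\alpha(D_1,D_2)(\mu),\beta(D_1,D_2)(\mu),\gamma(D_1,D_2)(\mu))$ as the image of $(p_0,p_1,p_2)(\mu,D_1,D_2)$ under the local inverse of $M$ near $(-D,\beta_0(\mu_{c_2}),A(\mu_{c_2}))$; thus the characteristic polynomial factors as $(\alpha(D_1,D_2)(\mu)-x)(\beta(D_1,D_2)(\mu)-\gamma(D_1,D_2)(\mu)x+x^2)$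 and $\gamma(D,D)(\mu)=A(\mu)$. *)

theory Defs
  imports "HOL-Analysis.Analysis"
begin

text \<open>lambda_P(d) = lam f1 g1 d, lambda_Z(d) = lam f2 g2 d:
  the (unique, f strictly increasing) l >= 0 with f l = d / g.\<close>
definition lam :: "(real \<Rightarrow> real) \<Rightarrow> real \<Rightarrow> real \<Rightarrow> real" where
  "lam f g d = (THE l. 0 \<le> l \<and> f l = d / g)"

definition muc1 :: "(real \<Rightarrow> real) \<Rightarrow> (real \<Rightarrow> real) \<Rightarrow> real \<Rightarrow> real \<Rightarrow> real \<Rightarrow> real \<Rightarrow> real \<Rightarrow> real" where
  "muc1 f1 f2 g1 g2 D D1 D2 = lam f1 g1 D1 + D1 * lam f2 g2 D2 / (D * g1)"

definition Neq :: "(real \<Rightarrow> real) \<Rightarrow> (real \<Rightarrow> real) \<Rightarrow> real \<Rightarrow> real \<Rightarrow> real \<Rightarrow> real \<Rightarrow> real \<Rightarrow> real \<Rightarrow> real" where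
  "Neq f1 f2 g1 g2 D mu D1 D2 =
     (THE N. 0 < N \<and> N < mu \<and> (mu - N) * D - lam f2 g2 D2 * f1 N = 0)"

definition Zeq :: "(real \<Rightarrow> real) \<Rightarrow> (real \<Rightarrow> real) \<Rightarrow> real \<Rightarrow> real \<Rightarrow> real \<Rightarrow> real \<Rightarrow> real \<Rightarrow> real \<Rightarrow> real" where
  "Zeq f1 f2 g1 g2 D mu D1 D2 =
     (g2 / D2) * lam f2 g2 D2 * (g1 * f1 (Neq f1 f2 g1 g2 D mu D1 D2) - D1)"

definition E2 :: "(real \<Rightarrow> real) \<Rightarrow> (real \<Rightarrow> real) \<Rightarrow> real \<Rightarrow> real \<Rightarrow> real \<Rightarrow> real \<Rightarrow> real \<Rightarrow> real \<Rightarrow> real \<times> real \<times> real" where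
  "E2 f1 f2 g1 g2 D mu D1 D2 =
     (Neq f1 f2 g1 g2 D mu D1 D2, lam f2 g2 D2, Zeq f1 f2 g1 g2 D mu D1 D2)"

text \<open>Jacobian of the vector field
  N' = (mu - N) D - P f1(N),
  P' = g1 P f1(N) - D1 P - Z f2(P),
  Z' = g2 Z f2(P) - D2 Z
  at the point (N,P,Z); f1d, f2d are the derivatives of f1, f2.\<close>
definition Jac :: "(real \<Rightarrow> real) \<Rightarrow> (real \<Rightarrow> real) \<Rightarrow> (real \<Rightarrow> real) \<Rightarrow> (real \<Rightarrow> real)
     \<Rightarrow> real \<Rightarrow> real \<Rightarrow> real \<Rightarrow> real \<Rightarrow> real \<Rightarrow> real \<times> real \<times> real \<Rightarrow> real^3^3" where
  "Jac f1 f1d f2 f2d g1 g2 D D1 D2 E = (case E of (N, P, Z) \<Rightarrow>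
     vector [
       vector [- D - P * f1d N, - f1 N, 0],
       vector [g1 * P * f1d N, g1 * f1 N - D1 - Z * f2d P, - f2 P],
       vector [0, g2 * Z * f2d P, g2 * f2 P - D2]])"

definition charcoeffs :: "real^3^3 \<Rightarrow> real \<times> real \<times> real" where
  "charcoeffs J = (THE p. \<forall>x::real.
      det (J - x *\<^sub>R mat 1) = fst p + fst (snd p) * x + snd (snd p) * x ^ 2 - x ^ 3)"

definition multM :: "real \<times> real \<times> real \<Rightarrow> real \<times> real \<times> real" where
  "multM t = (case t of (a, b, c) \<Rightarrow> (a * b, - a * c - b, a + c))"

definition gamma_fac :: "real \<times> real \<times> real \<Rightarrow> real" where
  "gamma_fac p = (THE c. \<exists>a b. a < 0 \<and> c ^ 2 - 4 * b < 0 \<and> multM (a, b, c) = p)"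

definition gam :: "(real \<Rightarrow> real) \<Rightarrow> (real \<Rightarrow> real) \<Rightarrow> (real \<Rightarrow> real) \<Rightarrow> (real \<Rightarrow> real)
     \<Rightarrow> real \<Rightarrow> real \<Rightarrow> real \<Rightarrow> real \<Rightarrow> real \<Rightarrow> real \<Rightarrow> real" where
  "gam f1 f1d f2 f2d g1 g2 D D1 D2 mu =
     gamma_fac (charcoeffs (Jac f1 f1d f2 f2d g1 g2 D D1 D2 (E2 f1 f2 g1 g2 D mu D1 D2)))"

definition Afun :: "(real \<Rightarrow> real) \<Rightarrow> (real \<Rightarrow> real) \<Rightarrow> (real \<Rightarrow> real) \<Rightarrow> (real \<Rightarrow> real)
     \<Rightarrow> real \<Rightarrow> real \<Rightarrow> real \<Rightarrow> real \<Rightarrow> real" where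
  "Afun f1 f1d f2 f2d g1 g2 D mu =
     Zeq f1 f2 g1 g2 D mu D D * (D / (g2 * lam f2 g2 D) - f2d (lam f2 g2 D))
     - lam f2 g2 D * f1d (Neq f1 f2 g1 g2 D mu D D)"

end

theory Submission
  imports Defs
begin


section \<open>Algebra of the characteristic polynomial\<close>

lemma cubic_coeffs_unique:
  fixes a0 a1 a2 b0 b1 b2 :: real
  assumes "\<forall>x. a0 + a1 * x + a2 * x ^ 2 - x ^ 3 = b0 + b1 * x + b2 * x ^ 2 - x ^ 3"
  shows "a0 = b0 \<and> a1 = b1 \<and> a2 = b2"
proof -
  have e0: "a0 = b0" using spec[OF assms, of 0] by simp
  have e1: "a0 + a1 + a2 = b0 + b1 + b2" using spec[OF assms, of 1] by simp
  have e2: "a0 - a1 + a2 = b0 - b1 + b2" using spec[OF assms, of "-1"] by simp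
  from e0 e1 e2 have "a1 = b1" "a2 = b2" by linarith+
  with e0 show ?thesis by simp
qed

lemma charcoeffs_eqI:
  assumes "\<forall>x. det (J - x *\<^sub>R mat 1) = p0 + p1 * x + p2 * x ^ 2 - x ^ 3"
  shows "charcoeffs J = (p0, p1, p2)"
  unfolding charcoeffs_def
proof (rule the_equality)
  show "\<forall>x. det (J - x *\<^sub>R mat 1) = fst (p0, p1, p2) + fst (snd (p0, p1, p2)) * x + snd (snd (p0, p1, p2)) * x\<^sup>2 - x ^ 3"
    using assms by simp
next
  fix p :: "real \<times> real \<times> real"
  assume h: "\<forall>x. det (J - x *\<^sub>R mat 1) = fst p + fst (snd p) * x + snd (snd p) * x\<^sup>2 - x ^ 3"
  have "\<forall>x. fst p + fst (snd p) * x + snd (snd p) * x\<^sup>2 - x ^ 3 = p0 + p1 * x + p2 * x ^ 2 - x ^ 3"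
    using h assms by auto
  from cubic_coeffs_unique[OF this] show "p = (p0, p1, p2)" by (cases p) auto
qed

lemma detJ:
  "det (Jac f1 f1d f2 f2d g1 g2 D D1 D2 (N,P,Z) - x *\<^sub>R mat 1) =
   (let j11 = - D - P * f1d N; j12 = - f1 N; j21 = g1 * P * f1d N;
        j22 = g1 * f1 N - D1 - Z * f2d P; j23 = - f2 P; j32 = g2 * Z * f2d P; j33 = g2 * f2 P - D2
    in (j11 - x)*(j22-x)*(j33-x) - (j11 - x)*j23*j32 - j12*j21*(j33-x))"
  unfolding Jac_def by (simp add: det_3 mat_def Let_def algebra_simps)

lemma charcoeffs_Jac:
  assumes "g2 * f2 P = D2"
  shows "charcoeffs (Jac f1 f1d f2 f2d g1 g2 D D1 D2 (N,P,Z)) =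
    (let j11 = - D - P * f1d N; j22 = g1 * f1 N - D1 - Z * f2d P;
         m = - D2 * Z * f2d P; n = - g1 * P * f1 N * f1d N
     in (- j11 * m, - j11 * j22 + m + n, j11 + j22))"
proof -
  have f2P: "f2 P = D2 / g2 \<or> g2 = 0" using assms by (auto simp: field_simps)
  show ?thesis unfolding Let_def
    apply (rule charcoeffs_eqI)
    apply (simp only: detJ Let_def)
    using assms by (auto simp: algebra_simps power2_eq_square power3_eq_cube)
qed

lemma multM_poly:
  assumes "multM (a, b, c) = (p0, p1, p2)"
  shows "p0 + p1 * x + p2 * x ^ 2 - x ^ 3 = (a - x) * (b - c * x + x ^ 2)"
proof -
  have e: "p0 = a * b" "p1 = - a * c - b" "p2 = a + c" using assms unfolding multM_def by auto
  show ?thesis unfolding e by (simp add: algebra_simps power2_eq_square power3_eq_cube)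
qed

lemma quad_pos:
  fixes b c y :: real
  shows "b - c * y + y ^ 2 \<ge> (4 * b - c ^ 2) / 4"
proof -
  have "b - c * y + y ^ 2 - (4 * b - c ^ 2) / 4 = (y - c / 2) ^ 2"
    by (simp add: power2_eq_square field_simps)
  then show ?thesis by (metis diff_ge_0_iff_ge zero_le_power2)
qed

lemma multM_unique:
  assumes "multM (a, b, c) = multM (a', b', c')" "c ^ 2 - 4 * b < 0"
  shows "c = c'"
proof -
  obtain p0 p1 p2 where p: "multM (a', b', c') = (p0, p1, p2)" by (cases "multM (a', b', c')") auto
  have "p0 + p1 * a' + p2 * a' ^ 2 - a' ^ 3 = (a - a') * (b - c * a' + a' ^ 2)"
    using multM_poly[of a b c p0 p1 p2 a'] assms p by simp
  moreover have "p0 + p1 * a' + p2 * a' ^ 2 - a' ^ 3 = (a' - a') * (b' - c' * a' + a' ^ 2)"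
    using multM_poly[OF p] by simp
  moreover have "b - c * a' + a' ^ 2 > 0"
  proof -
    have "0 < (4 * b - c ^ 2) / 4" using assms(2) by simp
    then show ?thesis using quad_pos[of b c a'] by linarith
  qed
  ultimately have "a = a'" by simp
  with assms(1) show ?thesis unfolding multM_def by auto
qed

lemma gamma_fac_eq:
  assumes "a < 0" "c ^ 2 - 4 * b < 0" "multM (a, b, c) = p"
  shows "gamma_fac p = c"
  unfolding gamma_fac_def
proof (rule the_equality)
  show "\<exists>a b. a < 0 \<and> c ^ 2 - 4 * b < 0 \<and> multM (a, b, c) = p" using assms by blast
next
  fix c' assume "\<exists>a' b'. a' < 0 \<and> c' ^ 2 - 4 * b' < 0 \<and> multM (a', b', c') = p"
  then obtain a' b' where "c' ^ 2 - 4 * b' < 0" "multM (a', b', c') = p" by blast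
  then show "c' = c" using multM_unique[of a' b' c' a b c] assms by simp
qed


lemma root_deriv:
  fixes a b c p0 p1 p2 :: "real \<Rightarrow> real"
  assumes S: "open S" "x0 \<in> S"
    and fac: "\<forall>x\<in>S. multM (a x, b x, c x) = (p0 x, p1 x, p2 x)"
    and disc: "\<forall>x\<in>S. 4 * b x - (c x) ^ 2 \<ge> \<eta>" and eta: "\<eta> > 0"
    and d0: "(p0 has_real_derivative p0') (at x0)"
    and d1: "(p1 has_real_derivative p1') (at x0)"
    and d2: "(p2 has_real_derivative p2') (at x0)"
  shows "(a has_real_derivative
            (p0' + p1' * a x0 + p2' * (a x0) ^ 2) / (b x0 - c x0 * a x0 + (a x0) ^ 2)) (at x0)"
proof -
  define \<alpha> where "\<alpha> = a x0"
  define Q where "Q x = p0 x + p1 x * \<alpha> + p2 x * \<alpha> ^ 2 - \<alpha> ^ 3" for x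
  define W where "W x = b x - c x * \<alpha> + \<alpha> ^ 2" for x
  have QW: "Q x = (a x - \<alpha>) * W x" if "x \<in> S" for x
    using multM_poly[of "a x" "b x" "c x" "p0 x" "p1 x" "p2 x" \<alpha>] fac that
    unfolding Q_def W_def by simp
  have Q0: "Q x0 = 0" using QW[OF S(2)] by (simp add: \<alpha>_def)
  have Wpos: "W x \<ge> \<eta> / 4" if "x \<in> S" for x
    using quad_pos[of "b x" "c x" \<alpha>] disc that unfolding W_def by (smt (verit) divide_right_mono)
  have dQ: "(Q has_real_derivative (p0' + p1' * \<alpha> + p2' * \<alpha> ^ 2)) (at x0)"
    unfolding Q_def by (auto intro!: derivative_eq_intros d0 d1 d2)
  have cQ: "(Q \<longlongrightarrow> 0) (at x0)"
    using DERIV_isCont[OF dQ] Q0 by (metis isCont_def)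
  have evS: "eventually (\<lambda>x. x \<in> S) (at x0)" using eventually_at_in_open'[OF S] .
  have "((\<lambda>x. a x - \<alpha>) \<longlongrightarrow> 0) (at x0)"
  proof (rule Lim_null_comparison)
    show "eventually (\<lambda>x. norm (a x - \<alpha>) \<le> 4 / \<eta> * \<bar>Q x\<bar>) (at x0)"
      using evS
    proof (rule eventually_mono)
      fix x assume x: "x \<in> S"
      have "\<bar>Q x\<bar> = \<bar>a x - \<alpha>\<bar> * W x" using QW[OF x] Wpos[OF x] eta
        by (simp add: abs_mult)
      also have "\<dots> \<ge> \<bar>a x - \<alpha>\<bar> * (\<eta> / 4)" using Wpos[OF x] by (intro mult_left_mono) auto
      finally show "norm (a x - \<alpha>) \<le> 4 / \<eta> * \<bar>Q x\<bar>" using eta by (simp add: field_simps)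
    qed
    show "((\<lambda>x. 4 / \<eta> * \<bar>Q x\<bar>) \<longlongrightarrow> 0) (at x0)"
      using tendsto_mult_right_zero[OF tendsto_rabs_zero[OF cQ], of "4 / \<eta>"] by simp
  qed
  then have ca: "(a \<longlongrightarrow> \<alpha>) (at x0)" by (simp add: LIM_zero_iff)
  have cp1: "(p1 \<longlongrightarrow> p1 x0) (at x0)" using DERIV_isCont[OF d1] by (simp add: isCont_def)
  have cp2: "(p2 \<longlongrightarrow> p2 x0) (at x0)" using DERIV_isCont[OF d2] by (simp add: isCont_def)
  define Wf where "Wf x = - p1 x - a x * (p2 x - a x) - (p2 x - a x) * \<alpha> + \<alpha> ^ 2" for x
  have WWf: "W x = Wf x" if "x \<in> S" for x
  proof -
    have "c x = p2 x - a x" "b x = - p1 x - a x * c x"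
      using fac that unfolding multM_def by auto
    then show ?thesis unfolding W_def Wf_def by simp
  qed
  have cW: "(W \<longlongrightarrow> W x0) (at x0)"
  proof -
    have "(Wf \<longlongrightarrow> - p1 x0 - \<alpha> * (p2 x0 - \<alpha>) - (p2 x0 - \<alpha>) * \<alpha> + \<alpha> ^ 2) (at x0)"
      unfolding Wf_def by (intro tendsto_intros ca cp1 cp2)
    then have "(Wf \<longlongrightarrow> Wf x0) (at x0)" by (simp add: Wf_def \<alpha>_def)
    then show ?thesis using WWf[OF S(2)]
      by (metis (mono_tags, lifting) WWf evS eventually_mono tendsto_cong)
  qed
  have W0: "W x0 \<noteq> 0" using Wpos[OF S(2)] eta by linarith
  have "((\<lambda>y. (Q y - Q x0) / (y - x0) / W y) \<longlongrightarrow> (p0' + p1' * \<alpha> + p2' * \<alpha> ^ 2) / W x0) (at x0)"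
    using tendsto_divide[OF dQ[unfolded has_field_derivative_iff] cW W0] .
  moreover have "eventually (\<lambda>y. (Q y - Q x0) / (y - x0) / W y = (a y - a x0) / (y - x0)) (at x0)"
    using eventually_at_in_open[OF S]
  proof (rule eventually_mono)
    fix y assume yy: "y \<in> S - {x0}"
    then have y: "y \<in> S" and yne: "y - x0 \<noteq> 0" by auto
    have "W y \<noteq> 0" using Wpos[OF y] eta by linarith
    moreover have "Q y - Q x0 = (a y - a x0) * W y" using QW[OF y] Q0 by (simp add: \<alpha>_def)
    ultimately show "(Q y - Q x0) / (y - x0) / W y = (a y - a x0) / (y - x0)"
      using yne by (metis nonzero_mult_div_cancel_right times_divide_eq_left)
  qed
  ultimately have "((\<lambda>y. (a y - a x0) / (y - x0)) \<longlongrightarrow> (p0' + p1' * \<alpha> + p2' * \<alpha> ^ 2) / W x0) (at x0)"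
    by (rule Lim_transform_eventually)
  then show ?thesis unfolding has_field_derivative_iff W_def \<alpha>_def .
qed


section \<open>Functions that are bounded and Lipschitz relative to the base point\<close>

definition good :: "real set \<Rightarrow> real \<Rightarrow> real \<Rightarrow> (real \<Rightarrow> real \<Rightarrow> real \<Rightarrow> real) \<Rightarrow> bool" where
  "good I r D F \<longleftrightarrow> (\<exists>B C. \<forall>\<mu>\<in>I. \<forall>d1 d2. \<bar>d1 - D\<bar> \<le> r \<longrightarrow> \<bar>d2 - D\<bar> \<le> r \<longrightarrow>
      \<bar>F \<mu> d1 d2\<bar> \<le> B \<and> \<bar>F \<mu> d1 d2 - F \<mu> D D\<bar> \<le> C * (\<bar>d1 - D\<bar> + \<bar>d2 - D\<bar>))"

lemma goodI:
  assumes "\<And>\<mu> d1 d2. \<mu> \<in> I \<Longrightarrow> \<bar>d1 - D\<bar> \<le> r \<Longrightarrow> \<bar>d2 - D\<bar> \<le> r \<Longrightarrow>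
      \<bar>F \<mu> d1 d2\<bar> \<le> B \<and> \<bar>F \<mu> d1 d2 - F \<mu> D D\<bar> \<le> C * (\<bar>d1 - D\<bar> + \<bar>d2 - D\<bar>)"
  shows "good I r D F"
  unfolding good_def using assms by blast

lemma goodE:
  assumes "good I r D F"
  obtains B C where "C \<ge> 0" "B \<ge> 0" "\<And>\<mu> d1 d2. \<mu> \<in> I \<Longrightarrow> \<bar>d1 - D\<bar> \<le> r \<Longrightarrow> \<bar>d2 - D\<bar> \<le> r \<Longrightarrow>
      \<bar>F \<mu> d1 d2\<bar> \<le> B \<and> \<bar>F \<mu> d1 d2 - F \<mu> D D\<bar> \<le> C * (\<bar>d1 - D\<bar> + \<bar>d2 - D\<bar>)"
proof -
  from assms obtain B C where h: "\<forall>\<mu>\<in>I. \<forall>d1 d2. \<bar>d1 - D\<bar> \<le> r \<longrightarrow> \<bar>d2 - D\<bar> \<le> r \<longrightarrow>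
      \<bar>F \<mu> d1 d2\<bar> \<le> B \<and> \<bar>F \<mu> d1 d2 - F \<mu> D D\<bar> \<le> C * (\<bar>d1 - D\<bar> + \<bar>d2 - D\<bar>)"
    unfolding good_def by blast
  show ?thesis
  proof (rule that[of "max C 0" "max B 0"])
    fix \<mu> d1 d2 assume a: "\<mu> \<in> I" "\<bar>d1 - D\<bar> \<le> r" "\<bar>d2 - D\<bar> \<le> r"
    have "C * (\<bar>d1 - D\<bar> + \<bar>d2 - D\<bar>) \<le> max C 0 * (\<bar>d1 - D\<bar> + \<bar>d2 - D\<bar>)"
      by (intro mult_right_mono) auto
    moreover have "\<bar>F \<mu> d1 d2\<bar> \<le> B" "\<bar>F \<mu> d1 d2 - F \<mu> D D\<bar> \<le> C * (\<bar>d1 - D\<bar> + \<bar>d2 - D\<bar>)"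
      using h a by auto
    ultimately show "\<bar>F \<mu> d1 d2\<bar> \<le> max B 0 \<and> \<bar>F \<mu> d1 d2 - F \<mu> D D\<bar> \<le> max C 0 * (\<bar>d1 - D\<bar> + \<bar>d2 - D\<bar>)"
      by (meson max.coboundedI1 order_trans)
  qed auto
qed

lemma good_mono: "good I r D F \<Longrightarrow> r' \<le> r \<Longrightarrow> good I r' D F"
  unfolding good_def by (meson order_trans)

lemma good_const: "good I r D (\<lambda>\<mu> d1 d2. k)"
  by (rule goodI[of _ _ _ _ "\<bar>k\<bar>" 0]) auto

lemma good_d1: "good I r D (\<lambda>\<mu> d1 d2. d1)"
  by (rule goodI[of _ _ _ _ "\<bar>D\<bar> + \<bar>r\<bar>" 1]) auto

lemma good_d2: "good I r D (\<lambda>\<mu> d1 d2. d2)"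
  by (rule goodI[of _ _ _ _ "\<bar>D\<bar> + \<bar>r\<bar>" 1]) auto

lemma good_mu:
  assumes "\<And>\<mu>. \<mu> \<in> I \<Longrightarrow> \<bar>G \<mu>\<bar> \<le> B"
  shows "good I r D (\<lambda>\<mu> d1 d2. G \<mu>)"
  by (rule goodI[of _ _ _ _ B 0]) (auto simp: assms)

lemma good_add:
  assumes "good I r D F" "good I r D G"
  shows "good I r D (\<lambda>\<mu> d1 d2. F \<mu> d1 d2 + G \<mu> d1 d2)"
proof -
  obtain B1 C1 where 1: "\<And>\<mu> d1 d2. \<mu> \<in> I \<Longrightarrow> \<bar>d1 - D\<bar> \<le> r \<Longrightarrow> \<bar>d2 - D\<bar> \<le> r \<Longrightarrow>
      \<bar>F \<mu> d1 d2\<bar> \<le> B1 \<and> \<bar>F \<mu> d1 d2 - F \<mu> D D\<bar> \<le> C1 * (\<bar>d1 - D\<bar> + \<bar>d2 - D\<bar>)"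
    using goodE[OF assms(1)] by metis
  obtain B2 C2 where 2: "\<And>\<mu> d1 d2. \<mu> \<in> I \<Longrightarrow> \<bar>d1 - D\<bar> \<le> r \<Longrightarrow> \<bar>d2 - D\<bar> \<le> r \<Longrightarrow>
      \<bar>G \<mu> d1 d2\<bar> \<le> B2 \<and> \<bar>G \<mu> d1 d2 - G \<mu> D D\<bar> \<le> C2 * (\<bar>d1 - D\<bar> + \<bar>d2 - D\<bar>)"
    using goodE[OF assms(2)] by metis
  show ?thesis
  proof (rule goodI[of _ _ _ _ "B1 + B2" "C1 + C2"])
    fix \<mu> d1 d2 assume a: "\<mu> \<in> I" "\<bar>d1 - D\<bar> \<le> r" "\<bar>d2 - D\<bar> \<le> r"
    have e: "F \<mu> d1 d2 + G \<mu> d1 d2 - (F \<mu> D D + G \<mu> D D) = (F \<mu> d1 d2 - F \<mu> D D) + (G \<mu> d1 d2 - G \<mu> D D)"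
      by simp
    have "\<bar>F \<mu> d1 d2 + G \<mu> d1 d2 - (F \<mu> D D + G \<mu> D D)\<bar> \<le> \<bar>F \<mu> d1 d2 - F \<mu> D D\<bar> + \<bar>G \<mu> d1 d2 - G \<mu> D D\<bar>"
      unfolding e by (rule abs_triangle_ineq)
    with 1[OF a] 2[OF a] show "\<bar>F \<mu> d1 d2 + G \<mu> d1 d2\<bar> \<le> B1 + B2 \<and>
      \<bar>F \<mu> d1 d2 + G \<mu> d1 d2 - (F \<mu> D D + G \<mu> D D)\<bar> \<le> (C1 + C2) * (\<bar>d1 - D\<bar> + \<bar>d2 - D\<bar>)"
      using abs_triangle_ineq[of "F \<mu> d1 d2" "G \<mu> d1 d2"] by (auto simp: distrib_right)
  qed
qed

lemma good_uminus:
  assumes "good I r D F"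
  shows "good I r D (\<lambda>\<mu> d1 d2. - F \<mu> d1 d2)"
  using assms unfolding good_def by (metis abs_minus_cancel minus_diff_eq minus_diff_minus)

lemma good_diff:
  assumes "good I r D F" "good I r D G"
  shows "good I r D (\<lambda>\<mu> d1 d2. F \<mu> d1 d2 - G \<mu> d1 d2)"
  using good_add[OF assms(1) good_uminus[OF assms(2)]] by simp

lemma good_mult:
  assumes "good I r D F" "good I r D G" "0 \<le> r"
  shows "good I r D (\<lambda>\<mu> d1 d2. F \<mu> d1 d2 * G \<mu> d1 d2)"
proof -
  obtain B1 C1 where "C1 \<ge> 0" "B1 \<ge> 0" and 1: "\<And>\<mu> d1 d2. \<mu> \<in> I \<Longrightarrow> \<bar>d1 - D\<bar> \<le> r \<Longrightarrow> \<bar>d2 - D\<bar> \<le> r \<Longrightarrow>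
      \<bar>F \<mu> d1 d2\<bar> \<le> B1 \<and> \<bar>F \<mu> d1 d2 - F \<mu> D D\<bar> \<le> C1 * (\<bar>d1 - D\<bar> + \<bar>d2 - D\<bar>)"
    using goodE[OF assms(1)] by metis
  obtain B2 C2 where "C2 \<ge> 0" "B2 \<ge> 0" and 2: "\<And>\<mu> d1 d2. \<mu> \<in> I \<Longrightarrow> \<bar>d1 - D\<bar> \<le> r \<Longrightarrow> \<bar>d2 - D\<bar> \<le> r \<Longrightarrow>
      \<bar>G \<mu> d1 d2\<bar> \<le> B2 \<and> \<bar>G \<mu> d1 d2 - G \<mu> D D\<bar> \<le> C2 * (\<bar>d1 - D\<bar> + \<bar>d2 - D\<bar>)"
    using goodE[OF assms(2)] by metis
  show ?thesis
  proof (rule goodI[of _ _ _ _ "B1 * B2" "B1 * C2 + B2 * C1"])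
    fix \<mu> d1 d2 assume a: "\<mu> \<in> I" "\<bar>d1 - D\<bar> \<le> r" "\<bar>d2 - D\<bar> \<le> r"
    have b: "\<mu> \<in> I" "\<bar>D - D\<bar> \<le> r" "\<bar>D - D\<bar> \<le> r" using a assms(3) by auto
    define \<rho> where "\<rho> = \<bar>d1 - D\<bar> + \<bar>d2 - D\<bar>"
    have "\<bar>F \<mu> d1 d2 * G \<mu> d1 d2\<bar> \<le> B1 * B2"
      using 1[OF a] 2[OF a] unfolding abs_mult by (intro mult_mono) auto
    moreover have "\<bar>F \<mu> d1 d2 * G \<mu> d1 d2 - F \<mu> D D * G \<mu> D D\<bar>
        \<le> \<bar>F \<mu> d1 d2\<bar> * \<bar>G \<mu> d1 d2 - G \<mu> D D\<bar> + \<bar>G \<mu> D D\<bar> * \<bar>F \<mu> d1 d2 - F \<mu> D D\<bar>"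
    proof -
      have "F \<mu> d1 d2 * G \<mu> d1 d2 - F \<mu> D D * G \<mu> D D
          = F \<mu> d1 d2 * (G \<mu> d1 d2 - G \<mu> D D) + G \<mu> D D * (F \<mu> d1 d2 - F \<mu> D D)"
        by (simp add: algebra_simps)
      then show ?thesis by (metis abs_mult abs_triangle_ineq)
    qed
    moreover have "\<bar>F \<mu> d1 d2\<bar> * \<bar>G \<mu> d1 d2 - G \<mu> D D\<bar> \<le> B1 * (C2 * \<rho>)"
      using 1[OF a] 2[OF a] \<open>B1 \<ge> 0\<close> unfolding \<rho>_def by (intro mult_mono) auto
    moreover have "\<bar>G \<mu> D D\<bar> * \<bar>F \<mu> d1 d2 - F \<mu> D D\<bar> \<le> B2 * (C1 * \<rho>)"
      using 1[OF a] 2[OF b] \<open>B2 \<ge> 0\<close> unfolding \<rho>_def by (intro mult_mono) auto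
    ultimately show "\<bar>F \<mu> d1 d2 * G \<mu> d1 d2\<bar> \<le> B1 * B2 \<and>
       \<bar>F \<mu> d1 d2 * G \<mu> d1 d2 - F \<mu> D D * G \<mu> D D\<bar> \<le> (B1 * C2 + B2 * C1) * \<rho>"
      by (simp add: algebra_simps)
  qed
qed

lemma good_inverse:
  assumes "good I r D F" "0 \<le> r" "m > 0"
    and lb: "\<And>\<mu> d1 d2. \<mu> \<in> I \<Longrightarrow> \<bar>d1 - D\<bar> \<le> r \<Longrightarrow> \<bar>d2 - D\<bar> \<le> r \<Longrightarrow> \<bar>F \<mu> d1 d2\<bar> \<ge> m"
  shows "good I r D (\<lambda>\<mu> d1 d2. 1 / F \<mu> d1 d2)"
proof -
  obtain B1 C1 where "C1 \<ge> 0" "B1 \<ge> 0" and 1: "\<And>\<mu> d1 d2. \<mu> \<in> I \<Longrightarrow> \<bar>d1 - D\<bar> \<le> r \<Longrightarrow> \<bar>d2 - D\<bar> \<le> r \<Longrightarrow>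
      \<bar>F \<mu> d1 d2\<bar> \<le> B1 \<and> \<bar>F \<mu> d1 d2 - F \<mu> D D\<bar> \<le> C1 * (\<bar>d1 - D\<bar> + \<bar>d2 - D\<bar>)"
    using goodE[OF assms(1)] by metis
  show ?thesis
  proof (rule goodI[of _ _ _ _ "1 / m" "C1 / (m * m)"])
    fix \<mu> d1 d2 assume a: "\<mu> \<in> I" "\<bar>d1 - D\<bar> \<le> r" "\<bar>d2 - D\<bar> \<le> r"
    have b: "\<mu> \<in> I" "\<bar>D - D\<bar> \<le> r" "\<bar>D - D\<bar> \<le> r" using a assms(2) by auto
    define \<rho> where "\<rho> = \<bar>d1 - D\<bar> + \<bar>d2 - D\<bar>"
    have l1: "\<bar>F \<mu> d1 d2\<bar> \<ge> m" and l2: "\<bar>F \<mu> D D\<bar> \<ge> m" using lb[OF a] lb[OF b] .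
    have "\<bar>1 / F \<mu> d1 d2\<bar> \<le> 1 / m" using l1 \<open>m > 0\<close>
      by (simp add: abs_divide frac_le)
    moreover have "\<bar>1 / F \<mu> d1 d2 - 1 / F \<mu> D D\<bar> = \<bar>F \<mu> d1 d2 - F \<mu> D D\<bar> / (\<bar>F \<mu> d1 d2\<bar> * \<bar>F \<mu> D D\<bar>)"
      using l1 l2 \<open>m > 0\<close> by (simp add: field_simps abs_divide abs_mult abs_minus_commute)
    moreover have "\<bar>F \<mu> d1 d2 - F \<mu> D D\<bar> / (\<bar>F \<mu> d1 d2\<bar> * \<bar>F \<mu> D D\<bar>) \<le> C1 * \<rho> / (m * m)"
    proof (rule frac_le)
      show "0 \<le> C1 * \<rho>" using \<open>C1 \<ge> 0\<close> unfolding \<rho>_def by simp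
      show "\<bar>F \<mu> d1 d2 - F \<mu> D D\<bar> \<le> C1 * \<rho>" using 1[OF a] unfolding \<rho>_def by simp
      show "0 < m * m" using \<open>m > 0\<close> by simp
      show "m * m \<le> \<bar>F \<mu> d1 d2\<bar> * \<bar>F \<mu> D D\<bar>" using l1 l2 \<open>m > 0\<close> by (intro mult_mono) auto
    qed
    ultimately show "\<bar>1 / F \<mu> d1 d2\<bar> \<le> 1 / m \<and>
       \<bar>1 / F \<mu> d1 d2 - 1 / F \<mu> D D\<bar> \<le> C1 / (m * m) * \<rho>" by simp
  qed
qed

lemma good_comp:
  assumes "good I r D F" "0 \<le> r" "L \<ge> 0"
    and inT: "\<And>\<mu> d1 d2. \<mu> \<in> I \<Longrightarrow> \<bar>d1 - D\<bar> \<le> r \<Longrightarrow> \<bar>d2 - D\<bar> \<le> r \<Longrightarrow> F \<mu> d1 d2 \<in> T"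
    and hb: "\<And>x. x \<in> T \<Longrightarrow> \<bar>h x\<bar> \<le> Bh"
    and hl: "\<And>x y. x \<in> T \<Longrightarrow> y \<in> T \<Longrightarrow> \<bar>h x - h y\<bar> \<le> L * \<bar>x - y\<bar>"
  shows "good I r D (\<lambda>\<mu> d1 d2. h (F \<mu> d1 d2))"
proof -
  obtain B1 C1 where "C1 \<ge> 0" "B1 \<ge> 0" and 1: "\<And>\<mu> d1 d2. \<mu> \<in> I \<Longrightarrow> \<bar>d1 - D\<bar> \<le> r \<Longrightarrow> \<bar>d2 - D\<bar> \<le> r \<Longrightarrow>
      \<bar>F \<mu> d1 d2\<bar> \<le> B1 \<and> \<bar>F \<mu> d1 d2 - F \<mu> D D\<bar> \<le> C1 * (\<bar>d1 - D\<bar> + \<bar>d2 - D\<bar>)"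
    using goodE[OF assms(1)] by metis
  show ?thesis
  proof (rule goodI[of _ _ _ _ Bh "L * C1"])
    fix \<mu> d1 d2 assume a: "\<mu> \<in> I" "\<bar>d1 - D\<bar> \<le> r" "\<bar>d2 - D\<bar> \<le> r"
    have b: "\<mu> \<in> I" "\<bar>D - D\<bar> \<le> r" "\<bar>D - D\<bar> \<le> r" using a assms(2) by auto
    have "\<bar>h (F \<mu> d1 d2) - h (F \<mu> D D)\<bar> \<le> L * \<bar>F \<mu> d1 d2 - F \<mu> D D\<bar>"
      using hl[OF inT[OF a] inT[OF b]] .
    also have "\<dots> \<le> L * (C1 * (\<bar>d1 - D\<bar> + \<bar>d2 - D\<bar>))"
      using 1[OF a] \<open>L \<ge> 0\<close> by (intro mult_left_mono) auto
    finally show "\<bar>h (F \<mu> d1 d2)\<bar> \<le> Bh \<and>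
      \<bar>h (F \<mu> d1 d2) - h (F \<mu> D D)\<bar> \<le> L * C1 * (\<bar>d1 - D\<bar> + \<bar>d2 - D\<bar>)"
      using hb[OF inT[OF a]] by (simp add: mult.assoc)
  qed
qed


lemma lip_from_deriv:
  fixes h h' :: "real \<Rightarrow> real"
  assumes "\<And>x. x \<in> {a..b} \<Longrightarrow> (h has_real_derivative h' x) (at x within {a..b})"
    and "\<And>x. x \<in> {a..b} \<Longrightarrow> \<bar>h' x\<bar> \<le> B"
    and "x \<in> {a..b}" "y \<in> {a..b}"
  shows "\<bar>h x - h y\<bar> \<le> B * \<bar>x - y\<bar>"
  using field_differentiable_bound[of "{a..b}" h h' B x y] assms by auto

lemma cont_bound:
  fixes h :: "real \<Rightarrow> real"
  assumes "continuous_on {a..b} h"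
  obtains B where "B \<ge> 0" "\<And>x. x \<in> {a..b} \<Longrightarrow> \<bar>h x\<bar> \<le> B"
proof -
  have "bounded (h ` {a..b})" using compact_continuous_image[OF assms] compact_imp_bounded by blast
  then obtain B where "\<forall>x\<in>{a..b}. \<bar>h x\<bar> \<le> B" unfolding bounded_iff by auto
  then show ?thesis using that[of "max B 0"] by (meson max.coboundedI1 max.cobounded2 order_trans)
qed

lemma deriv_restrict:
  assumes "\<forall>x\<ge>0. (h has_real_derivative h' x) (at x within {0..})" "0 \<le> a" "x \<in> {a..b}"
  shows "(h has_real_derivative h' x) (at x within {a..b})"
proof -
  have "x \<ge> 0" using assms by auto
  then have "(h has_real_derivative h' x) (at x within {0..})" using assms(1) by blast
  then show ?thesis by (rule DERIV_subset) (use assms in auto)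
qed

lemma cont_from_deriv:
  assumes "\<forall>x\<ge>0. (h has_real_derivative h' x) (at x within {0..})"
  shows "continuous_on {0..} h"
  using assms by (auto simp: continuous_on_eq_continuous_within intro: DERIV_continuous)

lemma at_from_within:
  assumes "x > 0" "(h has_real_derivative d) (at x within {0..})"
  shows "(h has_real_derivative d) (at x)"
proof -
  have "x \<in> interior {0::real..}" using assms(1) by simp
  then show ?thesis using assms(2) at_within_interior by metis
qed

locale incf =
  fixes f fd :: "real \<Rightarrow> real"
  assumes f0: "f 0 = 0"
    and fder: "\<forall>x\<ge>0. (f has_real_derivative fd x) (at x within {0..})"
    and fdpos: "\<forall>x\<ge>0. fd x > 0"
begin

lemma fcont: "continuous_on {0..} f" using cont_from_deriv[OF fder] .

lemma fat: assumes "x > 0" shows "(f has_real_derivative fd x) (at x)"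
proof -
  have "(f has_real_derivative fd x) (at x within {0..})" using fder assms by simp
  then show ?thesis using at_from_within[OF assms] by blast
qed

lemma fstrict: assumes "0 \<le> x" "x < y" shows "f x < f y"
proof (rule DERIV_pos_imp_increasing_open[OF assms(2)])
  fix z assume "x < z" "z < y"
  then have "z > 0" using assms by linarith
  then show "\<exists>d. (f has_real_derivative d) (at z) \<and> 0 < d" using fat[of z] fdpos by auto
next
  show "continuous_on {x..y} f" using fcont by (rule continuous_on_subset) (use assms in auto)
qed

lemma fmono: "0 \<le> x \<Longrightarrow> x \<le> y \<Longrightarrow> f x \<le> f y"
proof (cases "x = y")
  case False
  assume "0 \<le> x" "x \<le> y"
  with False have "x < y" by simp
  then show ?thesis using fstrict \<open>0 \<le> x\<close> by (simp add: less_imp_le)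
qed simp

lemma fnonneg: "0 \<le> x \<Longrightarrow> f x \<ge> 0" using fmono[of 0 x] f0 by simp

lemma fpos: "0 < x \<Longrightarrow> f x > 0" using fstrict[of 0 x] f0 by simp

lemma finj: "0 \<le> x \<Longrightarrow> 0 \<le> y \<Longrightarrow> f x = f y \<Longrightarrow> x = y"
proof (rule ccontr)
  assume a: "0 \<le> x" "0 \<le> y" "f x = f y" "x \<noteq> y"
  then consider "x < y" | "y < x" by linarith
  then show False using fstrict a by (cases, force, force)
qed

lemma lam_eq: "0 \<le> l \<Longrightarrow> f l = d / g \<Longrightarrow> lam f g d = l"
  unfolding lam_def by (rule the_equality) (auto intro: finj)

end


context incf
begin

definition Ng :: "real \<Rightarrow> real \<Rightarrow> real \<Rightarrow> real" where
  "Ng D mu p = (THE N. 0 < N \<and> N < mu \<and> (mu - N) * D - p * f N = 0)"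

lemma Ng_spec:
  assumes D: "D > 0" and mu: "mu > 0" and p: "p > 0"
  shows "0 < Ng D mu p \<and> Ng D mu p < mu \<and> (mu - Ng D mu p) * D - p * f (Ng D mu p) = 0"
proof -
  define h where "h n = (mu - n) * D - p * f n" for n
  have hc: "continuous_on {0..mu} h"
  proof -
    have "continuous_on {0..mu} f" using fcont by (rule continuous_on_subset) auto
    then show ?thesis unfolding h_def by (intro continuous_intros)
  qed
  have h0: "h 0 > 0" using D mu f0 by (simp add: h_def)
  have hmu: "h mu < 0" using fpos[OF mu] p by (simp add: h_def)
  obtain n where n: "0 \<le> n" "n \<le> mu" "h n = 0"
    using IVT2'[of h mu 0 0, OF _ _ _ hc] h0 hmu mu by (meson less_imp_le)
  have n0: "n \<noteq> 0" using n h0 by auto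
  have nmu: "n \<noteq> mu" using n hmu by auto
  have ex: "0 < n \<and> n < mu \<and> (mu - n) * D - p * f n = 0" using n n0 nmu h_def by auto
  have uniq: "m = n" if m: "0 < m \<and> m < mu \<and> (mu - m) * D - p * f m = 0" for m
  proof (rule ccontr)
    assume "m \<noteq> n"
    then consider "m < n" | "n < m" by linarith
    then show False
    proof cases
      case 1
      have "f m < f n" using fstrict[OF _ 1] m by linarith
      then have "p * f m < p * f n" using p by simp
      moreover have "(mu - n) * D < (mu - m) * D" using 1 D by (intro mult_strict_right_mono) auto
      ultimately show False using m ex by linarith
    next
      case 2
      have "f n < f m" using fstrict[OF _ 2] ex by linarith
      then have "p * f n < p * f m" using p by simp
      moreover have "(mu - m) * D < (mu - n) * D" using 2 D by (intro mult_strict_right_mono) auto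
      ultimately show False using m ex by linarith
    qed
  qed
  have "Ng D mu p = n" unfolding Ng_def by (rule the_equality[where P="\<lambda>N. 0 < N \<and> N < mu \<and> (mu - N) * D - p * f N = 0", OF ex uniq])
  then show ?thesis using ex by simp
qed

lemma sol_diff:
  assumes D: "D > 0" and p': "p' > 0" and n: "n \<ge> 0" "n' \<ge> 0"
    and e: "(mu - n) * D - p * f n = 0" "(mu' - n') * D - p' * f n' = 0"
  shows "\<bar>n' - n\<bar> * D \<le> \<bar>(mu' - mu) * D - (p' - p) * f n\<bar>"
proof -
  have key: "(n' - n) * D + p' * (f n' - f n) = (mu' - mu) * D - (p' - p) * f n"
    using e by (simp add: algebra_simps)
  show ?thesis
  proof (cases "n \<le> n'")
    case True
    have "p' * (f n' - f n) \<ge> 0" using fmono[OF n(1) True] p' by simp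
    moreover have "(n' - n) * D \<ge> 0" using True D by simp
    ultimately show ?thesis using key True by (simp add: abs_mult)
  next
    case False
    have "p' * (f n' - f n) \<le> 0" using fmono[OF n(2)] False p' by (simp add: mult_nonneg_nonpos)
    moreover have "(n' - n) * D \<le> 0" using False D by (simp add: mult_nonpos_nonneg)
    moreover have "\<bar>n' - n\<bar> * D = - ((n' - n) * D)" using False D by (simp add: abs_if algebra_simps)
    moreover have "- ((n' - n) * D) \<le> - ((n' - n) * D + p' * (f n' - f n))" using calculation by linarith
    moreover have "- ((n' - n) * D + p' * (f n' - f n)) \<le> \<bar>(n' - n) * D + p' * (f n' - f n)\<bar>" by simp
    ultimately show ?thesis using key by linarith
  qed
qed

lemma Ng_diff:
  assumes D: "D > 0" and "mu > 0" "mu' > 0" "p > 0" "p' > 0"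
  shows "\<bar>Ng D mu' p' - Ng D mu p\<bar> * D \<le> \<bar>(mu' - mu) * D - (p' - p) * f (Ng D mu p)\<bar>"
  using Ng_spec[OF D assms(2,4)] Ng_spec[OF D assms(3,5)]
  by (intro sol_diff[OF D assms(5)]) auto

lemma Ng_cont:
  assumes D: "D > 0" and mu: "mu > 0" and p: "p > 0"
  shows "isCont (\<lambda>m. Ng D m p) mu"
proof -
  have "((\<lambda>m. Ng D m p - Ng D mu p) \<longlongrightarrow> 0) (at mu)"
  proof (rule Lim_null_comparison)
    have "eventually (\<lambda>m. m \<in> {0<..}) (at mu)" using mu by (intro eventually_at_in_open') auto
    then show "eventually (\<lambda>m. norm (Ng D m p - Ng D mu p) \<le> \<bar>m - mu\<bar>) (at mu)"
    proof (rule eventually_mono)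
      fix m :: real assume "m \<in> {0<..}"
      then have "\<bar>Ng D m p - Ng D mu p\<bar> * D \<le> \<bar>m - mu\<bar> * D"
        using Ng_diff[OF D mu _ p p, of m] D by (simp add: abs_mult abs_of_pos)
      then show "norm (Ng D m p - Ng D mu p) \<le> \<bar>m - mu\<bar>" using D by simp
    qed
    show "((\<lambda>m. \<bar>m - mu\<bar>) \<longlongrightarrow> 0) (at mu)"
      by (intro tendsto_eq_intros) auto
  qed
  then show ?thesis by (simp add: isCont_def LIM_zero_iff)
qed

lemma Ng_deriv:
  assumes D: "D > 0" and mu: "mu > 0" and p: "p > 0"
  shows "((\<lambda>m. Ng D m p) has_real_derivative D / (D + p * fd (Ng D mu p))) (at mu)"
proof -
  define n where "n = Ng D mu p"
  have npos: "n > 0" using Ng_spec[OF D mu p] n_def by simp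
  have dphi: "((\<lambda>x. x + p * f x / D) has_real_derivative 1 + p * fd n / D) (at n)"
    using D by (auto intro!: derivative_eq_intros fat[OF npos])
  have ne: "1 + p * fd n / D \<noteq> 0"
  proof -
    have "fd n > 0" using fdpos npos by simp
    then have "p * fd n / D > 0" using p D by simp
    then show ?thesis by linarith
  qed
  have inv: "(\<lambda>x. x + p * f x / D) (Ng D y p) = y" if "0 < y" "y < mu + 1" for y
    using Ng_spec[OF D that(1) p] D by (simp add: field_simps)
  have "((\<lambda>m. Ng D m p) has_real_derivative inverse (1 + p * fd (Ng D mu p) / D)) (at mu)"
    by (rule DERIV_inverse_function[where g="\<lambda>m. Ng D m p" and x=mu, OF dphi[unfolded n_def] ne[unfolded n_def], of 0 "mu + 1"])
       (use mu inv Ng_cont[OF D mu p] n_def in auto)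
  moreover have "inverse (1 + p * fd n / D) = D / (D + p * fd n)"
  proof -
    have "1 + p * fd n / D = (D + p * fd n) / D" using D by (simp add: field_simps)
    then show ?thesis by simp
  qed
  ultimately show ?thesis by (simp add: n_def)
qed


end


context incf
begin

lemma lam_exists:
  assumes "(f \<longlongrightarrow> L) at_top" "0 < y" "y < L"
  shows "\<exists>l>0. f l = y"
proof -
  have "eventually (\<lambda>x. y < f x) at_top" using order_tendstoD(1)[OF assms(1) assms(3)] .
  then obtain X where X: "\<forall>x\<ge>X. y < f x" unfolding eventually_at_top_linorder by blast
  define X' where "X' = max X 1"
  have fX: "y < f X'" using X X'_def by simp
  have c: "continuous_on {0..X'} f" using fcont by (rule continuous_on_subset) auto
  have a1: "f 0 \<le> y" using f0 assms(2) by simp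
  have a2: "y \<le> f X'" using fX by simp
  have a3: "0 \<le> X'" using X'_def by simp
  obtain l where l: "0 \<le> l" "l \<le> X'" "f l = y"
    using IVT'[of f 0 y X', OF a1 a2 a3 c] by blast
  have "l \<noteq> 0" using l f0 assms(2) by auto
  then show ?thesis using l by (intro exI[of _ l]) auto
qed

lemma inv_lip:
  assumes "0 < a" "x \<in> {a..b}" "y \<in> {a..b}" "\<forall>t\<in>{a..b}. fd t \<ge> m"
  shows "m * \<bar>x - y\<bar> \<le> \<bar>f x - f y\<bar>"
proof -
  have key: "m * (v - u) \<le> f v - f u" if "u \<in> {a..b}" "v \<in> {a..b}" "u \<le> v" for u v
  proof -
    have "(\<lambda>t. f t - m * t) u \<le> (\<lambda>t. f t - m * t) v"
    proof (rule DERIV_nonneg_imp_nondecreasing[OF \<open>u \<le> v\<close>])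
      fix t assume t: "u \<le> t" "t \<le> v"
      then have tt: "t \<in> {a..b}" "t > 0" using that assms(1) by auto
      have "((\<lambda>t. f t - m * t) has_real_derivative fd t - m) (at t)"
        by (auto intro!: derivative_eq_intros fat[OF tt(2)])
      moreover have "fd t - m \<ge> 0" using assms(4) tt by auto
      ultimately show "\<exists>y. ((\<lambda>t. f t - m * t) has_real_derivative y) (at t) \<and> 0 \<le> y" by blast
    qed
    then show ?thesis by (simp add: algebra_simps)
  qed
  show ?thesis
  proof (cases "x \<le> y")
    case True
    have "f x \<le> f y" using fmono True assms by auto
    then show ?thesis using key[OF assms(2,3) True] True by (simp add: abs_minus_commute)
  next
    case False
    have "f y \<le> f x" using fmono False assms by auto
    then show ?thesis using key[OF assms(3,2)] False by simp
  qed
qed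

end



lemma good_sq: "good I r D F \<Longrightarrow> 0 \<le> r \<Longrightarrow> good I r D (\<lambda>\<mu> d1 d2. (F \<mu> d1 d2) ^ 2)"
  using good_mult[of I r D F F] by (simp add: power2_eq_square)

locale sysl =
  fixes f1 f1d f1dd f1ddd f2 f2d f2dd :: "real \<Rightarrow> real"
    and D g1 g2 muc2 :: real
  assumes D_pos: "D > 0" and g1_pos: "g1 > 0" and g2_pos: "g2 > 0"
    and f1_bdd: "bounded (f1 ` {0..})"
    and f1_0: "f1 0 = 0" and f2_0: "f2 0 = 0"
    and f1_deriv: "\<forall>x\<ge>0. (f1 has_real_derivative f1d x) (at x within {0..})"
    and f2_deriv: "\<forall>x\<ge>0. (f2 has_real_derivative f2d x) (at x within {0..})"
    and f1d_pos: "\<forall>x\<ge>0. f1d x > 0" and f2d_pos: "\<forall>x\<ge>0. f2d x > 0"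
    and f1_lim: "\<exists>L1. (f1 \<longlongrightarrow> L1) at_top \<and>
                   (\<exists>e>0. \<forall>d. \<bar>d - D\<bar> < e \<longrightarrow> L1 > d / g1)"
    and f2_lim: "\<exists>L2. (f2 \<longlongrightarrow> L2) at_top \<and>
                   (\<exists>e>0. \<forall>d. \<bar>d - D\<bar> < e \<longrightarrow> L2 > d / g2)"
    and f1_C3: "\<forall>x\<ge>0. (f1d has_real_derivative f1dd x) (at x within {0..})"
               "\<forall>x\<ge>0. (f1dd has_real_derivative f1ddd x) (at x within {0..})"
               "continuous_on {0..} f1ddd"
    and f2_C2: "\<forall>x\<ge>0. (f2d has_real_derivative f2dd x) (at x within {0..})"
               "continuous_on {0..} f2dd"
    and hyp: "D / (g2 * lam f2 g2 D) > f2d (lam f2 g2 D)"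
    and muc2_gt: "muc2 > muc1 f1 f2 g1 g2 D D D"
    and muc2_zero: "Afun f1 f1d f2 f2d g1 g2 D muc2 = 0"

sublocale sysl \<subseteq> i1: incf f1 f1d
  using sysl.f1_0 sysl.f1_deriv sysl.f1d_pos sysl_axioms by unfold_locales auto

sublocale sysl \<subseteq> i2: incf f2 f2d
  using sysl.f2_0 sysl.f2_deriv sysl.f2d_pos sysl_axioms by unfold_locales auto

context sysl
begin

definition "P0 = lam f2 g2 D"
definition "LP = lam f1 g1 D"

lemma P0_props: "P0 > 0" "f2 P0 = D / g2"
proof -
  obtain L2 e where L: "(f2 \<longlongrightarrow> L2) at_top" "e > 0" "\<forall>d. \<bar>d - D\<bar> < e \<longrightarrow> L2 > d / g2"
    using f2_lim by blast
  have "L2 > D / g2" using L(2,3) by auto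
  then obtain l where l: "l > 0" "f2 l = D / g2"
    using i2.lam_exists[OF L(1)] D_pos g2_pos by (meson divide_pos_pos)
  have "P0 = l" unfolding P0_def using i2.lam_eq l by simp
  then show "P0 > 0" "f2 P0 = D / g2" using l by auto
qed

lemma LP_props: "LP > 0" "f1 LP = D / g1"
proof -
  obtain L1 e where L: "(f1 \<longlongrightarrow> L1) at_top" "e > 0" "\<forall>d. \<bar>d - D\<bar> < e \<longrightarrow> L1 > d / g1"
    using f1_lim by blast
  have "L1 > D / g1" using L(2,3) by auto
  then obtain l where l: "l > 0" "f1 l = D / g1"
    using i1.lam_exists[OF L(1)] D_pos g1_pos by (meson divide_pos_pos)
  have "LP = l" unfolding LP_def using i1.lam_eq l by simp
  then show "LP > 0" "f1 LP = D / g1" using l by auto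
qed

lemma f1_bound: obtains B1 where "B1 \<ge> 0" "\<And>x. x \<ge> 0 \<Longrightarrow> f1 x \<le> B1"
proof -
  obtain B where "\<forall>y\<in>f1 ` {0..}. norm y \<le> B" using f1_bdd unfolding bounded_iff by blast
  then have "\<And>x. x \<ge> 0 \<Longrightarrow> f1 x \<le> B" by force
  moreover have "B \<ge> 0" using calculation[of 0] f1_0 by simp
  ultimately show ?thesis using that by blast
qed

lemma P_local:
  "\<exists>rP>0. \<exists>Lp\<ge>0. \<forall>d2. \<bar>d2 - D\<bar> \<le> rP \<longrightarrow>
     lam f2 g2 d2 \<in> {P0/2 .. 3*P0/2} \<and> g2 * f2 (lam f2 g2 d2) = d2 \<and>
     \<bar>lam f2 g2 d2 - P0\<bar> \<le> Lp * \<bar>d2 - D\<bar>"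
proof -
  define lo hi where "lo = P0/2" and "hi = 3*P0/2"
  have lohi: "0 < lo" "lo < P0" "P0 < hi" using P0_props unfolding lo_def hi_def by auto
  have flo: "f2 lo < D / g2" using i2.fstrict[of lo P0] lohi P0_props by simp
  have fhi: "D / g2 < f2 hi" using i2.fstrict[of P0 hi] lohi P0_props by simp
  define e where "e = min (D / g2 - f2 lo) (f2 hi - D / g2)"
  have e: "e > 0" using flo fhi unfolding e_def by simp
  define rP where "rP = g2 * e / 2"
  have rP: "rP > 0" using e g2_pos unfolding rP_def by simp
  have f2dc: "continuous_on {0..} f2d" using cont_from_deriv[OF f2_C2(1)] .
  obtain xm where xm: "xm \<in> {lo..hi}" "\<forall>y\<in>{lo..hi}. f2d xm \<le> f2d y"
    using continuous_attains_inf[of "{lo..hi}" f2d] continuous_on_subset[OF f2dc, of "{lo..hi}"] lohi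
    by auto
  define m2 where "m2 = f2d xm"
  have m2: "m2 > 0" using f2d_pos xm lohi unfolding m2_def by auto
  show ?thesis
  proof (intro exI conjI allI impI)
    show "rP > 0" by (rule rP)
    show "1 / (g2 * m2) \<ge> 0" using g2_pos m2 by simp
    fix d2 assume d2: "\<bar>d2 - D\<bar> \<le> rP"
    have "\<bar>d2 / g2 - D / g2\<bar> = \<bar>d2 - D\<bar> / g2" using g2_pos by (simp add: diff_divide_distrib[symmetric])
    also have "\<dots> \<le> rP / g2" using d2 g2_pos by (simp add: divide_right_mono)
    also have "\<dots> < e" using e g2_pos unfolding rP_def by simp
    finally have close: "\<bar>d2 / g2 - D / g2\<bar> < e" .
    have y1: "f2 lo \<le> d2 / g2" using close unfolding e_def by linarith
    have y2: "d2 / g2 \<le> f2 hi" using close unfolding e_def by linarith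
    have c: "continuous_on {lo..hi} f2" using i2.fcont by (rule continuous_on_subset) (use lohi in auto)
    obtain l where l: "lo \<le> l" "l \<le> hi" "f2 l = d2 / g2"
      using IVT'[of f2 lo "d2 / g2" hi, OF y1 y2 _ c] lohi by auto
    have lam: "lam f2 g2 d2 = l" using i2.lam_eq[of l "d2" g2] l lohi by simp
    show "lam f2 g2 d2 \<in> {P0 / 2..3 * P0 / 2}" using l lam unfolding lo_def hi_def by simp
    show "g2 * f2 (lam f2 g2 d2) = d2" using l lam g2_pos by simp
    have "m2 * \<bar>l - P0\<bar> \<le> \<bar>f2 l - f2 P0\<bar>"
      using i2.inv_lip[of lo l hi P0 m2] lohi l xm unfolding m2_def by auto
    also have "\<dots> = \<bar>d2 - D\<bar> / g2" using l P0_props g2_pos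
      by (simp add: diff_divide_distrib[symmetric])
    finally have "m2 * \<bar>l - P0\<bar> \<le> \<bar>d2 - D\<bar> / g2" .
    then have "(m2 * \<bar>l - P0\<bar>) / m2 \<le> (\<bar>d2 - D\<bar> / g2) / m2" by (rule divide_right_mono) (use m2 in simp)
    then have "\<bar>l - P0\<bar> \<le> \<bar>d2 - D\<bar> / g2 / m2" using m2 by simp
    then show "\<bar>lam f2 g2 d2 - P0\<bar> \<le> 1 / (g2 * m2) * \<bar>d2 - D\<bar>" using lam by (simp add: divide_divide_eq_left)
  qed
qed


definition "rPc = (SOME rP. rP > 0 \<and> (\<exists>Lp\<ge>0. \<forall>d2. \<bar>d2 - D\<bar> \<le> rP \<longrightarrow>
     lam f2 g2 d2 \<in> {P0/2 .. 3*P0/2} \<and> g2 * f2 (lam f2 g2 d2) = d2 \<and>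
     \<bar>lam f2 g2 d2 - P0\<bar> \<le> Lp * \<bar>d2 - D\<bar>))"

definition "Lpc = (SOME Lp. Lp \<ge> 0 \<and> (\<forall>d2. \<bar>d2 - D\<bar> \<le> rPc \<longrightarrow>
     lam f2 g2 d2 \<in> {P0/2 .. 3*P0/2} \<and> g2 * f2 (lam f2 g2 d2) = d2 \<and>
     \<bar>lam f2 g2 d2 - P0\<bar> \<le> Lp * \<bar>d2 - D\<bar>))"

lemma rPc_props: "rPc > 0" "Lpc \<ge> 0"
  "\<And>d2. \<bar>d2 - D\<bar> \<le> rPc \<Longrightarrow> lam f2 g2 d2 \<in> {P0/2 .. 3*P0/2}"
  "\<And>d2. \<bar>d2 - D\<bar> \<le> rPc \<Longrightarrow> g2 * f2 (lam f2 g2 d2) = d2"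
  "\<And>d2. \<bar>d2 - D\<bar> \<le> rPc \<Longrightarrow> \<bar>lam f2 g2 d2 - P0\<bar> \<le> Lpc * \<bar>d2 - D\<bar>"
proof -
  have A: "rPc > 0 \<and> (\<exists>Lp\<ge>0. \<forall>d2. \<bar>d2 - D\<bar> \<le> rPc \<longrightarrow>
     lam f2 g2 d2 \<in> {P0/2 .. 3*P0/2} \<and> g2 * f2 (lam f2 g2 d2) = d2 \<and>
     \<bar>lam f2 g2 d2 - P0\<bar> \<le> Lp * \<bar>d2 - D\<bar>)"
    unfolding rPc_def using someI_ex[OF P_local] .
  then have B: "Lpc \<ge> 0 \<and> (\<forall>d2. \<bar>d2 - D\<bar> \<le> rPc \<longrightarrow>
     lam f2 g2 d2 \<in> {P0/2 .. 3*P0/2} \<and> g2 * f2 (lam f2 g2 d2) = d2 \<and>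
     \<bar>lam f2 g2 d2 - P0\<bar> \<le> Lpc * \<bar>d2 - D\<bar>)"
    unfolding Lpc_def using someI_ex[of "\<lambda>Lp. Lp \<ge> 0 \<and> (\<forall>d2. \<bar>d2 - D\<bar> \<le> rPc \<longrightarrow>
     lam f2 g2 d2 \<in> {P0/2 .. 3*P0/2} \<and> g2 * f2 (lam f2 g2 d2) = d2 \<and>
     \<bar>lam f2 g2 d2 - P0\<bar> \<le> Lp * \<bar>d2 - D\<bar>)"] by blast
  show "rPc > 0" using A by blast
  show "Lpc \<ge> 0" using B by blast
  fix d2 assume "\<bar>d2 - D\<bar> \<le> rPc"
  then show "lam f2 g2 d2 \<in> {P0/2 .. 3*P0/2}" "g2 * f2 (lam f2 g2 d2) = d2"
    "\<bar>lam f2 g2 d2 - P0\<bar> \<le> Lpc * \<bar>d2 - D\<bar>" using B by auto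
qed

lemma lipT:
  fixes h h' :: "real \<Rightarrow> real"
  assumes "\<forall>x\<ge>0. (h has_real_derivative h' x) (at x within {0..})" "continuous_on {0..} h'" "0 \<le> lo"
  obtains L where "L \<ge> 0" "\<And>x y. x \<in> {lo..hi} \<Longrightarrow> y \<in> {lo..hi} \<Longrightarrow> \<bar>h x - h y\<bar> \<le> L * \<bar>x - y\<bar>"
proof -
  have "continuous_on {lo..hi} h'" using assms(2) by (rule continuous_on_subset) (use assms(3) in auto)
  then obtain B where B: "B \<ge> 0" "\<And>x. x \<in> {lo..hi} \<Longrightarrow> \<bar>h' x\<bar> \<le> B" using cont_bound by blast
  show ?thesis
  proof (rule that[OF B(1)])
    fix x y assume "x \<in> {lo..hi}" "y \<in> {lo..hi}"
    then show "\<bar>h x - h y\<bar> \<le> B * \<bar>x - y\<bar>"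
      using lip_from_deriv[of lo hi h h' B x y] deriv_restrict[OF assms(1) assms(3)] B(2) by blast
  qed
qed

lemma bndT:
  fixes h :: "real \<Rightarrow> real"
  assumes "continuous_on {0..} h" "0 \<le> lo"
  obtains B where "B \<ge> 0" "\<And>x. x \<in> {lo..hi} \<Longrightarrow> \<bar>h x\<bar> \<le> B"
proof -
  have "continuous_on {lo..hi} h" using assms(1) by (rule continuous_on_subset) (use assms(2) in auto)
  then show ?thesis using cont_bound that by blast
qed

lemma f1d_cont: "continuous_on {0..} f1d" using cont_from_deriv[OF f1_C3(1)] .
lemma f1dd_cont: "continuous_on {0..} f1dd" using cont_from_deriv[OF f1_C3(2)] .
lemma f2d_cont: "continuous_on {0..} f2d" using cont_from_deriv[OF f2_C2(1)] .

definition "Pf d2 = lam f2 g2 d2"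
definition "Nf mu d2 = i1.Ng D mu (Pf d2)"
definition "y1 mu d1 d2 = f1 (Nf mu d2)"
definition "y2 mu d1 d2 = f1d (Nf mu d2)"
definition "y3 mu d1 d2 = f1dd (Nf mu d2)"
definition "sP mu d1 d2 = f2d (Pf d2)"
definition "Ndf mu d1 d2 = D * (1 / (D + Pf d2 * y2 mu d1 d2))"
definition "Zf mu d1 d2 = (g2 / d2) * Pf d2 * (g1 * y1 mu d1 d2 - d1)"
definition "j11 mu d1 d2 = - D - Pf d2 * y2 mu d1 d2"
definition "j22 mu d1 d2 = g1 * y1 mu d1 d2 - d1 - Zf mu d1 d2 * sP mu d1 d2"
definition "mm mu d1 d2 = - d2 * Zf mu d1 d2 * sP mu d1 d2"
definition "nn mu d1 d2 = - g1 * Pf d2 * y1 mu d1 d2 * y2 mu d1 d2"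
definition "p0 mu d1 d2 = - j11 mu d1 d2 * mm mu d1 d2"
definition "p1 mu d1 d2 = - j11 mu d1 d2 * j22 mu d1 d2 + mm mu d1 d2 + nn mu d1 d2"
definition "p2 mu d1 d2 = j11 mu d1 d2 + j22 mu d1 d2"
definition "y1d mu d1 d2 = y2 mu d1 d2 * Ndf mu d1 d2"
definition "y2d mu d1 d2 = y3 mu d1 d2 * Ndf mu d1 d2"
definition "Zd mu d1 d2 = (g2 / d2) * Pf d2 * (g1 * y1d mu d1 d2)"
definition "j11d mu d1 d2 = - Pf d2 * y2d mu d1 d2"
definition "j22d mu d1 d2 = g1 * y1d mu d1 d2 - Zd mu d1 d2 * sP mu d1 d2"
definition "mmd mu d1 d2 = - d2 * Zd mu d1 d2 * sP mu d1 d2"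
definition "nnd mu d1 d2 = - g1 * Pf d2 * (y1d mu d1 d2 * y2 mu d1 d2 + y1 mu d1 d2 * y2d mu d1 d2)"
definition "p0d mu d1 d2 = - (j11d mu d1 d2 * mm mu d1 d2 + j11 mu d1 d2 * mmd mu d1 d2)"
definition "p1d mu d1 d2 = - (j11d mu d1 d2 * j22 mu d1 d2 + j11 mu d1 d2 * j22d mu d1 d2) + mmd mu d1 d2 + nnd mu d1 d2"
definition "p2d mu d1 d2 = j11d mu d1 d2 + j22d mu d1 d2"

lemma Neq_eq: "Neq f1 f2 g1 g2 D mu D1 D2 = Nf mu D2"
  unfolding Neq_def Nf_def i1.Ng_def Pf_def ..

lemma Zeq_eq: "Zeq f1 f2 g1 g2 D mu D1 D2 = Zf mu D1 D2"
  unfolding Zeq_def Zf_def Neq_eq y1_def Pf_def ..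

lemma charcoeffs_eq:
  assumes "\<bar>d2 - D\<bar> \<le> rPc"
  shows "charcoeffs (Jac f1 f1d f2 f2d g1 g2 D d1 d2 (E2 f1 f2 g1 g2 D mu d1 d2))
           = (p0 mu d1 d2, p1 mu d1 d2, p2 mu d1 d2)"
proof -
  have "g2 * f2 (Pf d2) = d2" using rPc_props(4)[OF assms] unfolding Pf_def .
  then show ?thesis
    unfolding E2_def Neq_eq Zeq_eq
    by (subst charcoeffs_Jac) (auto simp: Let_def p0_def p1_def p2_def j11_def j22_def mm_def nn_def
          y1_def y2_def sP_def Pf_def algebra_simps)
qed


context
  fixes a b r :: real
  assumes a_pos: "0 < a" and r_nn: "0 \<le> r" and r_P: "r \<le> rPc" and r_D: "r \<le> D / 2"
begin

lemma Pf_in: "\<bar>d2 - D\<bar> \<le> r \<Longrightarrow> Pf d2 \<in> {P0/2 .. 3*P0/2}"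
  using rPc_props(3) r_P unfolding Pf_def by simp

lemma Pf_pos: "\<bar>d2 - D\<bar> \<le> r \<Longrightarrow> Pf d2 > 0"
  using Pf_in P0_props(1) by fastforce

lemma Nf_props: "mu \<in> {a..b} \<Longrightarrow> \<bar>d2 - D\<bar> \<le> r \<Longrightarrow> 0 < Nf mu d2 \<and> Nf mu d2 < mu \<and>
   (mu - Nf mu d2) * D - Pf d2 * f1 (Nf mu d2) = 0"
  unfolding Nf_def using i1.Ng_spec[OF D_pos _ Pf_pos] a_pos by force

lemma gP: "good {a..b} r D (\<lambda>mu d1 d2. Pf d2)"
proof (rule goodI[of _ _ _ _ "3 * P0 / 2" Lpc])
  fix mu d1 d2 assume "mu \<in> {a..b}" "\<bar>d1 - D\<bar> \<le> r" "\<bar>d2 - D\<bar> \<le> r"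
  moreover have "Pf D = P0" unfolding Pf_def P0_def ..
  ultimately show "\<bar>Pf d2\<bar> \<le> 3 * P0 / 2 \<and> \<bar>Pf d2 - Pf D\<bar> \<le> Lpc * (\<bar>d1 - D\<bar> + \<bar>d2 - D\<bar>)"
  proof -
    assume a: "mu \<in> {a..b}" "\<bar>d1 - D\<bar> \<le> r" "\<bar>d2 - D\<bar> \<le> r" and e: "Pf D = P0"
    have "Lpc * \<bar>d2 - D\<bar> \<le> Lpc * (\<bar>d1 - D\<bar> + \<bar>d2 - D\<bar>)"
      using rPc_props(2) by (intro mult_left_mono) auto
    moreover have "\<bar>Pf d2 - P0\<bar> \<le> Lpc * \<bar>d2 - D\<bar>" using rPc_props(5)[of d2] a r_P unfolding Pf_def by simp
    moreover have "\<bar>Pf d2\<bar> \<le> 3 * P0 / 2" using Pf_in[of d2] Pf_pos[of d2] a by auto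
    ultimately show ?thesis using e by linarith
  qed
qed

lemma gN: "good {a..b} r D (\<lambda>mu d1 d2. Nf mu d2)"
proof -
  obtain B1 where B1: "B1 \<ge> 0" "\<And>x. x \<ge> 0 \<Longrightarrow> f1 x \<le> B1" using f1_bound by blast
  show ?thesis
  proof (rule goodI[of _ _ _ _ b "B1 / D * Lpc"])
    fix mu d1 d2 assume a: "mu \<in> {a..b}" "\<bar>d1 - D\<bar> \<le> r" "\<bar>d2 - D\<bar> \<le> r"
    have b: "\<bar>D - D\<bar> \<le> r" using r_nn by simp
    have N1: "0 < Nf mu d2" "Nf mu d2 < mu" using Nf_props[OF a(1) a(3)] by auto
    have N0: "0 < Nf mu D" using Nf_props[OF a(1) b] by auto
    have "\<bar>Nf mu d2 - Nf mu D\<bar> * D \<le> \<bar>(mu - mu) * D - (Pf d2 - Pf D) * f1 (Nf mu D)\<bar>"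
      unfolding Nf_def using i1.Ng_diff[OF D_pos _ _ Pf_pos[OF b] Pf_pos[OF a(3)], of mu mu] a(1) a_pos by auto
    also have "\<dots> = \<bar>Pf d2 - Pf D\<bar> * f1 (Nf mu D)" using i1.fnonneg[of "Nf mu D"] N0
      by (simp add: abs_mult)
    also have "\<dots> \<le> Lpc * \<bar>d2 - D\<bar> * B1"
    proof (rule mult_mono)
      show "\<bar>Pf d2 - Pf D\<bar> \<le> Lpc * \<bar>d2 - D\<bar>" using rPc_props(5)[of d2] a(3) r_P
        unfolding Pf_def P0_def by simp
    qed (use B1 N0 rPc_props(2) i1.fnonneg[of "Nf mu D"] in auto)
    finally have "\<bar>Nf mu d2 - Nf mu D\<bar> \<le> Lpc * \<bar>d2 - D\<bar> * B1 / D" using D_pos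
      by (simp add: pos_le_divide_eq)
    also have "\<dots> \<le> B1 / D * Lpc * (\<bar>d1 - D\<bar> + \<bar>d2 - D\<bar>)"
    proof -
      have "Lpc * \<bar>d2 - D\<bar> * B1 / D = B1 / D * Lpc * \<bar>d2 - D\<bar>" by simp
      also have "\<dots> \<le> B1 / D * Lpc * (\<bar>d1 - D\<bar> + \<bar>d2 - D\<bar>)"
        using B1 D_pos rPc_props(2) by (intro mult_left_mono) auto
      finally show ?thesis .
    qed
    finally show "\<bar>Nf mu d2\<bar> \<le> b \<and> \<bar>Nf mu d2 - Nf mu D\<bar> \<le> B1 / D * Lpc * (\<bar>d1 - D\<bar> + \<bar>d2 - D\<bar>)"
      using N1 a(1) by auto
  qed
qed

lemma N_in: "mu \<in> {a..b} \<Longrightarrow> \<bar>d1 - D\<bar> \<le> r \<Longrightarrow> \<bar>d2 - D\<bar> \<le> r \<Longrightarrow> Nf mu d2 \<in> {0..b}"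
  using Nf_props by fastforce

lemma gcompN:
  assumes "\<forall>x\<ge>0. (h has_real_derivative h' x) (at x within {0..})" "continuous_on {0..} h'"
  shows "good {a..b} r D (\<lambda>mu d1 d2. h (Nf mu d2))"
proof -
  obtain L where L: "L \<ge> 0" "\<And>x y. x \<in> {0..b} \<Longrightarrow> y \<in> {0..b} \<Longrightarrow> \<bar>h x - h y\<bar> \<le> L * \<bar>x - y\<bar>"
    using lipT[OF assms, of 0 b] by auto
  obtain B where B: "\<And>x. x \<in> {0..b} \<Longrightarrow> \<bar>h x\<bar> \<le> B"
    using bndT[OF cont_from_deriv[OF assms(1)], of 0 b] by auto
  show ?thesis by (rule good_comp[OF gN r_nn L(1) N_in B L(2)])
qed

lemma gy1: "good {a..b} r D y1"
  using gcompN[OF f1_deriv f1d_cont] unfolding y1_def .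
lemma gy2: "good {a..b} r D y2"
  using gcompN[OF f1_C3(1) f1dd_cont] unfolding y2_def .
lemma gy3: "good {a..b} r D y3"
  using gcompN[OF f1_C3(2) f1_C3(3)] unfolding y3_def .

lemma gsP: "good {a..b} r D sP"
proof -
  have lo: "0 \<le> P0 / 2" using P0_props by simp
  obtain L where L: "L \<ge> 0" "\<And>x y. x \<in> {P0/2..3*P0/2} \<Longrightarrow> y \<in> {P0/2..3*P0/2} \<Longrightarrow> \<bar>f2d x - f2d y\<bar> \<le> L * \<bar>x - y\<bar>"
    using lipT[OF f2_C2 lo, where hi="3*P0/2"] by auto
  obtain B where B: "\<And>x. x \<in> {P0/2..3*P0/2} \<Longrightarrow> \<bar>f2d x\<bar> \<le> B"
    using bndT[OF f2d_cont lo, where hi="3*P0/2"] by auto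
  show ?thesis unfolding sP_def
  proof (rule good_comp[OF gP r_nn L(1)])
    show "\<And>x. x \<in> {P0/2..3*P0/2} \<Longrightarrow> \<bar>f2d x\<bar> \<le> B" by (rule B)
    show "\<And>x y. x \<in> {P0/2..3*P0/2} \<Longrightarrow> y \<in> {P0/2..3*P0/2} \<Longrightarrow> \<bar>f2d x - f2d y\<bar> \<le> L * \<bar>x - y\<bar>"
      by (rule L(2))
  qed (use Pf_in in auto)
qed

lemma ginvd2: "good {a..b} r D (\<lambda>mu d1 d2. 1 / d2)"
proof (rule good_inverse[OF good_d2 r_nn, of "D / 2"])
  show "0 < D / 2" using D_pos by simp
  fix mu d1 d2 assume "\<bar>d2 - D\<bar> \<le> r"
  then show "D / 2 \<le> \<bar>d2\<bar>" using r_D by linarith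
qed

lemma gdivd2: "good {a..b} r D (\<lambda>mu d1 d2. g2 / d2)"
  using good_mult[OF good_const ginvd2 r_nn, of g2] by simp

lemma y2_pos: "mu \<in> {a..b} \<Longrightarrow> \<bar>d2 - D\<bar> \<le> r \<Longrightarrow> y2 mu d1 d2 > 0"
  unfolding y2_def using Nf_props f1d_pos by fastforce

lemma gNd: "good {a..b} r D Ndf"
proof -
  have "good {a..b} r D (\<lambda>mu d1 d2. 1 / (D + Pf d2 * y2 mu d1 d2))"
  proof (rule good_inverse[of _ _ _ _ D])
    show "good {a..b} r D (\<lambda>mu d1 d2. D + Pf d2 * y2 mu d1 d2)"
      by (intro good_add good_mult good_const gP gy2 r_nn)
    fix mu d1 d2 assume "mu \<in> {a..b}" "\<bar>d1 - D\<bar> \<le> r" "\<bar>d2 - D\<bar> \<le> r"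
    then have "Pf d2 > 0" "y2 mu d1 d2 > 0" using Pf_pos[of d2] y2_pos[of mu d2 d1] by auto
    then have "Pf d2 * y2 mu d1 d2 > 0" by simp
    then show "D \<le> \<bar>D + Pf d2 * y2 mu d1 d2\<bar>" using D_pos by simp
  qed (use r_nn D_pos in auto)
  then show ?thesis unfolding Ndf_def[abs_def] by (intro good_mult good_const r_nn)
qed

lemmas gbasic = good_add good_diff good_mult good_uminus good_const good_d1 good_d2 r_nn
  gP gy1 gy2 gy3 gsP gdivd2 gNd

lemma gZ: "good {a..b} r D Zf" unfolding Zf_def[abs_def] by (intro gbasic)
lemma gj11: "good {a..b} r D j11" unfolding j11_def[abs_def] by (intro gbasic)
lemma gj22: "good {a..b} r D j22" unfolding j22_def[abs_def] by (intro gbasic gZ)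
lemma gmm: "good {a..b} r D mm" unfolding mm_def[abs_def] by (intro gbasic gZ)
lemma gnn: "good {a..b} r D nn" unfolding nn_def[abs_def] by (intro gbasic)
lemma gp0: "good {a..b} r D p0" unfolding p0_def[abs_def] by (intro gbasic gj11 gmm)
lemma gp1: "good {a..b} r D p1" unfolding p1_def[abs_def] by (intro gbasic gj11 gj22 gmm gnn)
lemma gp2: "good {a..b} r D p2" unfolding p2_def[abs_def] by (intro gbasic gj11 gj22)
lemma gy1d: "good {a..b} r D y1d" unfolding y1d_def[abs_def] by (intro gbasic)
lemma gy2d: "good {a..b} r D y2d" unfolding y2d_def[abs_def] by (intro gbasic)
lemma gZd: "good {a..b} r D Zd" unfolding Zd_def[abs_def] by (intro gbasic gy1d)
lemma gj11d: "good {a..b} r D j11d" unfolding j11d_def[abs_def] by (intro gbasic gy2d)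
lemma gj22d: "good {a..b} r D j22d" unfolding j22d_def[abs_def] by (intro gbasic gy1d gZd)
lemma gmmd: "good {a..b} r D mmd" unfolding mmd_def[abs_def] by (intro gbasic gZd)
lemma gnnd: "good {a..b} r D nnd" unfolding nnd_def[abs_def] by (intro gbasic gy1d gy2d)
lemma gp0d: "good {a..b} r D p0d" unfolding p0d_def[abs_def] by (intro gbasic gj11 gmm gj11d gmmd)
lemma gp1d: "good {a..b} r D p1d" unfolding p1d_def[abs_def] by (intro gbasic gj11 gj22 gmm gnn gj11d gj22d gmmd gnnd)
lemma gp2d: "good {a..b} r D p2d" unfolding p2d_def[abs_def] by (intro gbasic gj11d gj22d)

end


context
  fixes mu d1 d2 :: real
  assumes d2r: "\<bar>d2 - D\<bar> \<le> rPc" and mu_pos: "mu > 0" and d2nz: "d2 \<noteq> 0"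
begin

lemma Pf_pos': "Pf d2 > 0"
  using rPc_props(3)[OF d2r] P0_props(1) unfolding Pf_def by fastforce

lemma N_pos': "Nf mu d2 > 0"
  unfolding Nf_def using i1.Ng_spec[OF D_pos mu_pos Pf_pos'] by simp

lemma dN: "((\<lambda>m. Nf m d2) has_real_derivative Ndf mu d1 d2) (at mu)"
  using i1.Ng_deriv[OF D_pos mu_pos Pf_pos'] unfolding Nf_def Ndf_def y2_def by simp

lemma dy1: "((\<lambda>m. y1 m d1 d2) has_real_derivative y1d mu d1 d2) (at mu)"
  unfolding y1_def y1d_def y2_def using DERIV_chain2[OF i1.fat[OF N_pos'] dN] .

lemma dy2: "((\<lambda>m. y2 m d1 d2) has_real_derivative y2d mu d1 d2) (at mu)"
proof -
  have "(f1d has_real_derivative f1dd (Nf mu d2)) (at (Nf mu d2))"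
    using at_from_within[OF N_pos'] f1_C3(1) N_pos' by auto
  then show ?thesis unfolding y2_def y2d_def y3_def using DERIV_chain2[OF _ dN] by blast
qed

lemma dZ: "((\<lambda>m. Zf m d1 d2) has_real_derivative Zd mu d1 d2) (at mu)"
  unfolding Zf_def Zd_def using d2nz by (auto intro!: derivative_eq_intros dy1)

lemma dj11: "((\<lambda>m. j11 m d1 d2) has_real_derivative j11d mu d1 d2) (at mu)"
  unfolding j11_def j11d_def by (auto intro!: derivative_eq_intros dy2)

lemma dj22: "((\<lambda>m. j22 m d1 d2) has_real_derivative j22d mu d1 d2) (at mu)"
  unfolding j22_def j22d_def sP_def by (auto intro!: derivative_eq_intros dy1 dZ)

lemma dmm: "((\<lambda>m. mm m d1 d2) has_real_derivative mmd mu d1 d2) (at mu)"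
  unfolding mm_def mmd_def sP_def by (auto intro!: derivative_eq_intros dZ)

lemma dnn: "((\<lambda>m. nn m d1 d2) has_real_derivative nnd mu d1 d2) (at mu)"
  unfolding nn_def nnd_def by (auto intro!: derivative_eq_intros dy1 dy2 simp: algebra_simps)

lemma dp0: "((\<lambda>m. p0 m d1 d2) has_real_derivative p0d mu d1 d2) (at mu)"
  unfolding p0_def p0d_def by (auto intro!: derivative_eq_intros dj11 dmm simp: algebra_simps)

lemma dp1: "((\<lambda>m. p1 m d1 d2) has_real_derivative p1d mu d1 d2) (at mu)"
  unfolding p1_def p1d_def by (auto intro!: derivative_eq_intros dj11 dj22 dmm dnn simp: algebra_simps)

lemma dp2: "((\<lambda>m. p2 m d1 d2) has_real_derivative p2d mu d1 d2) (at mu)"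
  unfolding p2_def p2d_def by (auto intro!: derivative_eq_intros dj11 dj22)

end


definition "beta0 mu = (D + P0 * y2 mu D D) * Zf mu D D * sP mu D D"
definition "muc1v = muc1 f1 f2 g1 g2 D D D"

lemma PfD: "Pf D = P0" unfolding Pf_def P0_def ..

lemma Afun_eq: "Afun f1 f1d f2 f2d g1 g2 D mu = Zf mu D D * (D / (g2 * P0) - sP mu D D) - P0 * y2 mu D D"
  unfolding Afun_def Zeq_eq Neq_eq sP_def y2_def PfD[symmetric] Pf_def ..

lemma base_multM:
  assumes mu: "mu > 0"
  shows "multM (- D, beta0 mu, Afun f1 f1d f2 f2d g1 g2 D mu) = (p0 mu D D, p1 mu D D, p2 mu D D)"
proof -
  have P0nz: "P0 \<noteq> 0" using P0_props by simp
  have Dnz: "D \<noteq> 0" and g2nz: "g2 \<noteq> 0" using D_pos g2_pos by auto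
  show ?thesis
    unfolding multM_def Afun_eq beta0_def p0_def p1_def p2_def j11_def j22_def mm_def nn_def Zf_def PfD
    using P0nz Dnz g2nz by (simp add: field_simps)
qed

lemma muc1v_eq: "muc1v = LP + P0 / g1"
  unfolding muc1v_def muc1_def LP_def P0_def using D_pos by simp

lemma muc1v_pos: "muc1v > 0"
proof -
  have "P0 / g1 > 0" using P0_props g1_pos by simp
  then show ?thesis using muc1v_eq LP_props by linarith
qed

lemma base_N_gt:
  assumes mu: "mu > muc1v"
  shows "Nf mu D > LP"
proof (rule ccontr)
  assume "\<not> Nf mu D > LP"
  then have le: "Nf mu D \<le> LP" by simp
  have mu0: "mu > 0" using mu muc1v_pos by simp
  have sp: "0 < Nf mu D" "(mu - Nf mu D) * D - P0 * f1 (Nf mu D) = 0"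
    using i1.Ng_spec[OF D_pos mu0, of P0] P0_props unfolding Nf_def PfD by auto
  have "f1 (Nf mu D) \<le> f1 LP" using i1.fmono[OF _ le] sp by simp
  then have "P0 * f1 (Nf mu D) \<le> P0 * (D / g1)" using P0_props LP_props by (intro mult_left_mono) auto
  moreover have "(mu - LP) * D \<le> (mu - Nf mu D) * D" using le D_pos by simp
  moreover have "P0 * (D / g1) < (mu - LP) * D"
  proof -
    have "P0 / g1 < mu - LP" using mu muc1v_eq by simp
    then have "P0 / g1 * D < (mu - LP) * D" using D_pos by (intro mult_strict_right_mono) auto
    then show ?thesis by (simp add: mult.commute)
  qed
  ultimately show False using sp by linarith
qed

lemma base_Z_pos:
  assumes mu: "mu > muc1v"
  shows "Zf mu D D > 0"
proof -
  have "f1 (Nf mu D) > f1 LP" using i1.fstrict[OF _ base_N_gt[OF mu]] LP_props by simp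
  then have "g1 * f1 (Nf mu D) > D" using LP_props g1_pos by (simp add: field_simps)
  then show ?thesis unfolding Zf_def y1_def PfD using P0_props D_pos g2_pos by simp
qed

lemma base_beta_pos:
  assumes mu: "mu > muc1v"
  shows "beta0 mu > 0"
proof -
  have mu0: "mu > 0" using mu muc1v_pos by simp
  have N0: "Nf mu D > 0" using base_N_gt[OF mu] LP_props by simp
  have "y2 mu D D > 0" unfolding y2_def using f1d_pos N0 by simp
  moreover have "sP mu D D > 0" unfolding sP_def PfD using f2d_pos P0_props by simp
  moreover have "D + P0 * y2 mu D D > 0" using calculation P0_props D_pos by (simp add: add_pos_pos)
  ultimately show ?thesis unfolding beta0_def using base_Z_pos[OF mu] by simp
qed

definition "dB mu = 4 * beta0 mu - (Afun f1 f1d f2 f2d g1 g2 D mu) ^ 2"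

lemma dB_cont:
  assumes mu: "mu > 0"
  shows "isCont dB mu"
proof -
  have d: "D \<noteq> 0" "\<bar>D - D\<bar> \<le> rPc" using D_pos rPc_props(1) by auto
  have c1: "isCont (\<lambda>m. y2 m D D) mu" using DERIV_isCont[OF dy2[OF d(2) mu d(1)]] .
  have c2: "isCont (\<lambda>m. Zf m D D) mu" using DERIV_isCont[OF dZ[OF d(2) mu d(1)]] .
  have e: "dB = (\<lambda>m. 4 * ((D + P0 * y2 m D D) * Zf m D D * sP mu D D) -
      (Zf m D D * (D / (g2 * P0) - sP mu D D) - P0 * y2 m D D) ^ 2)"
    unfolding dB_def beta0_def Afun_eq sP_def by simp
  show ?thesis unfolding e by (intro continuous_intros c1 c2)
qed

lemma dB_muc2: "dB muc2 > 0"
proof -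
  have "muc2 > muc1v" using muc2_gt muc1v_def by simp
  then show ?thesis unfolding dB_def using muc2_zero base_beta_pos by simp
qed


definition "qf mu d1 d2 x = p0 mu d1 d2 + p1 mu d1 d2 * x + p2 mu d1 d2 * x ^ 2 - x ^ 3"
definition "aR mu d1 d2 = (SOME a. - 3 * D / 2 \<le> a \<and> a \<le> - D / 2 \<and> qf mu d1 d2 a = 0)"
definition "cR mu d1 d2 = p2 mu d1 d2 - aR mu d1 d2"
definition "bR mu d1 d2 = - p1 mu d1 d2 - aR mu d1 d2 * cR mu d1 d2"
definition "ER mu d1 d2 = 4 * bR mu d1 d2 - (cR mu d1 d2) ^ 2"
definition "WR mu d1 d2 = bR mu d1 d2 - cR mu d1 d2 * aR mu d1 d2 + (aR mu d1 d2) ^ 2"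
definition "Phi mu d1 d2 = p2d mu d1 d2 -
   (p0d mu d1 d2 + p1d mu d1 d2 * aR mu d1 d2 + p2d mu d1 d2 * (aR mu d1 d2) ^ 2) * (1 / WR mu d1 d2)"

lemma abs_poly_bound:
  fixes u0 u1 u2 x X \<rho> C0 C1 C2 :: real
  assumes "\<bar>u0\<bar> \<le> C0 * \<rho>" "\<bar>u1\<bar> \<le> C1 * \<rho>" "\<bar>u2\<bar> \<le> C2 * \<rho>" "\<bar>x\<bar> \<le> X"
    "C1 \<ge> 0" "C2 \<ge> 0" "\<rho> \<ge> 0"
  shows "\<bar>u0 + u1 * x + u2 * x ^ 2\<bar> \<le> (C0 + C1 * X + C2 * X ^ 2) * \<rho>"
proof -
  have X: "X \<ge> 0" using assms(4) by linarith
  have "\<bar>u1 * x\<bar> \<le> C1 * \<rho> * X" unfolding abs_mult using assms X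
    by (intro mult_mono) auto
  moreover have "\<bar>u2 * x ^ 2\<bar> \<le> C2 * \<rho> * X ^ 2" unfolding abs_mult power_abs using assms X
    by (intro mult_mono power_mono) auto
  moreover have "\<bar>u0 + u1 * x + u2 * x ^ 2\<bar> \<le> \<bar>u0\<bar> + \<bar>u1 * x\<bar> + \<bar>u2 * x ^ 2\<bar>"
    by (smt (verit) abs_triangle_ineq)
  ultimately show ?thesis using assms(1) by (simp add: algebra_simps)
qed

context
  fixes a b \<eta> :: real
  assumes ab_gt: "a > muc1v" and dB_lb: "\<forall>mu\<in>{a..b}. dB mu \<ge> 2 * \<eta>" and eta_pos: "\<eta> > 0"
begin

lemma a_pos: "a > 0" using ab_gt muc1v_pos by simp

lemma in_ab_pos: "mu \<in> {a..b} \<Longrightarrow> mu > 0" using a_pos by simp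

lemma q0_fac: "mu \<in> {a..b} \<Longrightarrow>
  qf mu D D x = (- D - x) * (beta0 mu - Afun f1 f1d f2 f2d g1 g2 D mu * x + x ^ 2)"
  unfolding qf_def using multM_poly[OF base_multM[OF in_ab_pos]] by simp

lemma W0_lb: "mu \<in> {a..b} \<Longrightarrow> beta0 mu - Afun f1 f1d f2 f2d g1 g2 D mu * x + x ^ 2 \<ge> \<eta> / 2"
  using quad_pos[of "beta0 mu" "Afun f1 f1d f2 f2d g1 g2 D mu" x] dB_lb unfolding dB_def by force

definition "r0 = min rPc (D / 2)"

lemma r0_props: "r0 > 0" "r0 \<le> rPc" "r0 \<le> D / 2"
  unfolding r0_def using rPc_props(1) D_pos by auto

lemma qdiff_ex: "\<exists>Cq\<ge>0. \<forall>mu\<in>{a..b}. \<forall>d1 d2. \<bar>d1 - D\<bar> \<le> r0 \<longrightarrow> \<bar>d2 - D\<bar> \<le> r0 \<longrightarrow>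
   (\<forall>x. \<bar>x\<bar> \<le> 3 * D / 2 \<longrightarrow> \<bar>qf mu d1 d2 x - qf mu D D x\<bar> \<le> Cq * (\<bar>d1 - D\<bar> + \<bar>d2 - D\<bar>))"
proof -
  have r: "0 \<le> r0" "r0 \<le> rPc" "r0 \<le> D / 2" using r0_props by auto
  obtain B0 C0 where C0: "C0 \<ge> 0" and h0: "\<And>mu d1 d2. mu \<in> {a..b} \<Longrightarrow> \<bar>d1 - D\<bar> \<le> r0 \<Longrightarrow> \<bar>d2 - D\<bar> \<le> r0 \<Longrightarrow>
      \<bar>p0 mu d1 d2 - p0 mu D D\<bar> \<le> C0 * (\<bar>d1 - D\<bar> + \<bar>d2 - D\<bar>)"
    using goodE[OF gp0[OF a_pos r]] by metis
  obtain B1 C1 where C1: "C1 \<ge> 0" and h1: "\<And>mu d1 d2. mu \<in> {a..b} \<Longrightarrow> \<bar>d1 - D\<bar> \<le> r0 \<Longrightarrow> \<bar>d2 - D\<bar> \<le> r0 \<Longrightarrow>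
      \<bar>p1 mu d1 d2 - p1 mu D D\<bar> \<le> C1 * (\<bar>d1 - D\<bar> + \<bar>d2 - D\<bar>)"
    using goodE[OF gp1[OF a_pos r]] by metis
  obtain B2 C2 where C2: "C2 \<ge> 0" and h2: "\<And>mu d1 d2. mu \<in> {a..b} \<Longrightarrow> \<bar>d1 - D\<bar> \<le> r0 \<Longrightarrow> \<bar>d2 - D\<bar> \<le> r0 \<Longrightarrow>
      \<bar>p2 mu d1 d2 - p2 mu D D\<bar> \<le> C2 * (\<bar>d1 - D\<bar> + \<bar>d2 - D\<bar>)"
    using goodE[OF gp2[OF a_pos r]] by metis
  show ?thesis
  proof (intro exI[of _ "C0 + C1 * (3 * D / 2) + C2 * (3 * D / 2) ^ 2"] conjI ballI allI impI)
    show "0 \<le> C0 + C1 * (3 * D / 2) + C2 * (3 * D / 2)\<^sup>2" using C0 C1 C2 D_pos by simp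
    fix mu d1 d2 x assume a: "mu \<in> {a..b}" "\<bar>d1 - D\<bar> \<le> r0" "\<bar>d2 - D\<bar> \<le> r0" "\<bar>x\<bar> \<le> 3 * D / 2"
    have e: "qf mu d1 d2 x - qf mu D D x = (p0 mu d1 d2 - p0 mu D D) + (p1 mu d1 d2 - p1 mu D D) * x
       + (p2 mu d1 d2 - p2 mu D D) * x ^ 2" unfolding qf_def by (simp add: algebra_simps)
    show "\<bar>qf mu d1 d2 x - qf mu D D x\<bar> \<le> (C0 + C1 * (3 * D / 2) + C2 * (3 * D / 2)\<^sup>2) * (\<bar>d1 - D\<bar> + \<bar>d2 - D\<bar>)"
      unfolding e by (rule abs_poly_bound[OF h0[OF a(1-3)] h1[OF a(1-3)] h2[OF a(1-3)] a(4) C1 C2]) simp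
  qed
qed

definition "Cqc = (SOME Cq. Cq \<ge> 0 \<and> (\<forall>mu\<in>{a..b}. \<forall>d1 d2. \<bar>d1 - D\<bar> \<le> r0 \<longrightarrow> \<bar>d2 - D\<bar> \<le> r0 \<longrightarrow>
   (\<forall>x. \<bar>x\<bar> \<le> 3 * D / 2 \<longrightarrow> \<bar>qf mu d1 d2 x - qf mu D D x\<bar> \<le> Cq * (\<bar>d1 - D\<bar> + \<bar>d2 - D\<bar>))))"

lemma Cqc_props: "Cqc \<ge> 0"
  "\<And>mu d1 d2 x. mu \<in> {a..b} \<Longrightarrow> \<bar>d1 - D\<bar> \<le> r0 \<Longrightarrow> \<bar>d2 - D\<bar> \<le> r0 \<Longrightarrow> \<bar>x\<bar> \<le> 3 * D / 2 \<Longrightarrow>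
     \<bar>qf mu d1 d2 x - qf mu D D x\<bar> \<le> Cqc * (\<bar>d1 - D\<bar> + \<bar>d2 - D\<bar>)"
  using someI_ex[OF qdiff_ex] unfolding Cqc_def[symmetric] by blast+

definition "r1 = min r0 (D * \<eta> / (8 * (Cqc + 1)))"

lemma r1_props: "r1 > 0" "r1 \<le> r0" "2 * r1 * Cqc < D * \<eta> / 4"
proof -
  have c: "Cqc + 1 > 0" using Cqc_props(1) by simp
  show "r1 > 0" unfolding r1_def using r0_props D_pos eta_pos c by simp
  show "r1 \<le> r0" unfolding r1_def by simp
  have "r1 \<le> D * \<eta> / (8 * (Cqc + 1))" unfolding r1_def by simp
  then have "2 * r1 * Cqc \<le> 2 * (D * \<eta> / (8 * (Cqc + 1))) * Cqc"
    using Cqc_props(1) by (intro mult_right_mono) auto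
  also have "\<dots> = D * \<eta> / 4 * (Cqc / (Cqc + 1))" using c by (simp add: field_simps)
  also have "\<dots> < D * \<eta> / 4"
  proof -
    have "Cqc / (Cqc + 1) < 1" using c by simp
    moreover have "D * \<eta> / 4 > 0" using D_pos eta_pos by simp
    ultimately have "D * \<eta> / 4 * (Cqc / (Cqc + 1)) < D * \<eta> / 4 * 1" by (rule mult_strict_left_mono)
    then show ?thesis by simp
  qed
  finally show "2 * r1 * Cqc < D * \<eta> / 4" .
qed

lemma qclose:
  assumes "mu \<in> {a..b}" "\<bar>d1 - D\<bar> \<le> r1" "\<bar>d2 - D\<bar> \<le> r1" "\<bar>x\<bar> \<le> 3 * D / 2"
  shows "\<bar>qf mu d1 d2 x - qf mu D D x\<bar> < D * \<eta> / 4"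
proof -
  have "\<bar>qf mu d1 d2 x - qf mu D D x\<bar> \<le> Cqc * (\<bar>d1 - D\<bar> + \<bar>d2 - D\<bar>)"
    using Cqc_props(2)[OF assms(1) _ _ assms(4)] assms(2,3) r1_props(2) by auto
  also have "\<dots> \<le> Cqc * (2 * r1)" using assms Cqc_props(1) by (intro mult_left_mono) auto
  also have "\<dots> < D * \<eta> / 4" using r1_props(3) by (simp add: algebra_simps)
  finally show ?thesis .
qed

lemma root_ex:
  assumes K: "mu \<in> {a..b}" "\<bar>d1 - D\<bar> \<le> r1" "\<bar>d2 - D\<bar> \<le> r1"
  shows "\<exists>x. - 3 * D / 2 \<le> x \<and> x \<le> - D / 2 \<and> qf mu d1 d2 x = 0"
proof -
  have lo: "qf mu D D (- 3 * D / 2) \<ge> D * \<eta> / 4"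
  proof -
    have "qf mu D D (- 3 * D / 2) = (D / 2) * (beta0 mu - Afun f1 f1d f2 f2d g1 g2 D mu * (- 3 * D / 2) + (- 3 * D / 2) ^ 2)"
      using q0_fac[OF K(1)] by simp
    also have "\<dots> \<ge> (D / 2) * (\<eta> / 2)" using W0_lb[OF K(1), of "- 3 * D / 2"] D_pos by (intro mult_left_mono) auto
    finally show ?thesis by simp
  qed
  have hi: "qf mu D D (- D / 2) \<le> - (D * \<eta> / 4)"
  proof -
    define W where "W = beta0 mu - Afun f1 f1d f2 f2d g1 g2 D mu * (- D / 2) + (- D / 2) ^ 2"
    have e: "qf mu D D (- D / 2) = - ((D / 2) * W)"
      using q0_fac[OF K(1), of "- D / 2"] unfolding W_def by simp
    have "(D / 2) * W \<ge> (D / 2) * (\<eta> / 2)"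
      using W0_lb[OF K(1), of "- D / 2"] D_pos unfolding W_def by (intro mult_left_mono) auto
    then show ?thesis using e by simp
  qed
  have "\<bar>qf mu d1 d2 (- 3 * D / 2) - qf mu D D (- 3 * D / 2)\<bar> < D * \<eta> / 4"
    using qclose[OF K] D_pos by simp
  then have q1: "qf mu d1 d2 (- 3 * D / 2) \<ge> 0" using lo by linarith
  have "\<bar>qf mu d1 d2 (- D / 2) - qf mu D D (- D / 2)\<bar> < D * \<eta> / 4"
    using qclose[OF K] D_pos by simp
  then have q2: "qf mu d1 d2 (- D / 2) \<le> 0" using hi by linarith
  have c: "continuous_on {- 3 * D / 2 .. - D / 2} (qf mu d1 d2)"
    unfolding qf_def[abs_def] by (intro continuous_intros)
  show ?thesis using IVT2'[of "qf mu d1 d2" "- D / 2" 0 "- 3 * D / 2", OF q2 q1 _ c] D_pos by auto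
qed

lemma aR_props:
  assumes K: "mu \<in> {a..b}" "\<bar>d1 - D\<bar> \<le> r1" "\<bar>d2 - D\<bar> \<le> r1"
  shows "- 3 * D / 2 \<le> aR mu d1 d2 \<and> aR mu d1 d2 \<le> - D / 2 \<and> qf mu d1 d2 (aR mu d1 d2) = 0"
  unfolding aR_def using someI_ex[OF root_ex[OF K]] .

lemma aR_base:
  assumes K: "mu \<in> {a..b}"
  shows "aR mu D D = - D"
proof -
  have K': "mu \<in> {a..b}" "\<bar>D - D\<bar> \<le> r1" "\<bar>D - D\<bar> \<le> r1" using K r1_props by auto
  have "qf mu D D (aR mu D D) = 0" using aR_props[OF K'] by simp
  then have "(- D - aR mu D D) * (beta0 mu - Afun f1 f1d f2 f2d g1 g2 D mu * aR mu D D + (aR mu D D) ^ 2) = 0"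
    using q0_fac[OF K] by simp
  moreover have "beta0 mu - Afun f1 f1d f2 f2d g1 g2 D mu * aR mu D D + (aR mu D D) ^ 2 > 0"
    using W0_lb[OF K] eta_pos by (smt (verit) half_gt_zero)
  ultimately show ?thesis by simp
qed


lemma r1_facts: "0 \<le> r1" "r1 \<le> rPc" "r1 \<le> D / 2"
  using r1_props r0_props by auto

lemma g_aR: "good {a..b} r1 D aR"
proof (rule goodI[of _ _ _ _ "3 * D / 2" "2 * Cqc / \<eta>"])
  fix mu d1 d2 assume K: "mu \<in> {a..b}" "\<bar>d1 - D\<bar> \<le> r1" "\<bar>d2 - D\<bar> \<le> r1"
  define x where "x = aR mu d1 d2"
  have x: "- 3 * D / 2 \<le> x" "x \<le> - D / 2" "qf mu d1 d2 x = 0" using aR_props[OF K] x_def by auto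
  have xb: "\<bar>x\<bar> \<le> 3 * D / 2" using x D_pos by linarith
  have "\<bar>qf mu d1 d2 x - qf mu D D x\<bar> \<le> Cqc * (\<bar>d1 - D\<bar> + \<bar>d2 - D\<bar>)"
    using Cqc_props(2)[OF K(1) _ _ xb] K r1_props(2) by auto
  then have h: "\<bar>qf mu D D x\<bar> \<le> Cqc * (\<bar>d1 - D\<bar> + \<bar>d2 - D\<bar>)" using x(3) by simp
  define W where "W = beta0 mu - Afun f1 f1d f2 f2d g1 g2 D mu * x + x ^ 2"
  have W: "W \<ge> \<eta> / 2" using W0_lb[OF K(1)] W_def by simp
  have "\<bar>qf mu D D x\<bar> = \<bar>x + D\<bar> * W" using q0_fac[OF K(1), of x] W eta_pos unfolding W_def[symmetric]
    by (simp add: abs_mult abs_minus_commute)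
  moreover have "\<bar>x + D\<bar> * W \<ge> \<bar>x + D\<bar> * (\<eta> / 2)" using W by (intro mult_left_mono) auto
  ultimately have "\<bar>x + D\<bar> * (\<eta> / 2) \<le> Cqc * (\<bar>d1 - D\<bar> + \<bar>d2 - D\<bar>)" using h by linarith
  then have "\<bar>x + D\<bar> \<le> Cqc * (\<bar>d1 - D\<bar> + \<bar>d2 - D\<bar>) / (\<eta> / 2)" using eta_pos
    by (simp add: pos_le_divide_eq)
  also have "\<dots> = 2 * Cqc / \<eta> * (\<bar>d1 - D\<bar> + \<bar>d2 - D\<bar>)" by simp
  finally show "\<bar>aR mu d1 d2\<bar> \<le> 3 * D / 2 \<and>
     \<bar>aR mu d1 d2 - aR mu D D\<bar> \<le> 2 * Cqc / \<eta> * (\<bar>d1 - D\<bar> + \<bar>d2 - D\<bar>)"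
    using xb aR_base[OF K(1)] unfolding x_def by simp
qed

lemma ER_base: "mu \<in> {a..b} \<Longrightarrow> ER mu D D = dB mu"
proof -
  assume K: "mu \<in> {a..b}"
  have e: "- D * beta0 mu = p0 mu D D" "D * Afun f1 f1d f2 f2d g1 g2 D mu - beta0 mu = p1 mu D D"
     "- D + Afun f1 f1d f2 f2d g1 g2 D mu = p2 mu D D"
    using base_multM[OF in_ab_pos[OF K]] unfolding multM_def by auto
  show ?thesis unfolding ER_def bR_def cR_def aR_base[OF K] dB_def e[symmetric]
    by (simp add: algebra_simps)
qed

lemmas gb1 = gbasic[OF a_pos r1_facts] gp0[OF a_pos r1_facts] gp1[OF a_pos r1_facts] gp2[OF a_pos r1_facts]
  gp0d[OF a_pos r1_facts] gp1d[OF a_pos r1_facts] gp2d[OF a_pos r1_facts] g_aR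

lemma g_ER: "good {a..b} r1 D ER"
  unfolding ER_def[abs_def] bR_def cR_def by (intro gb1 good_sq r1_facts(1))

lemma r2_ex: "\<exists>r2>0. r2 \<le> r1 \<and> (\<forall>mu\<in>{a..b}. \<forall>d1 d2. \<bar>d1 - D\<bar> \<le> r2 \<longrightarrow> \<bar>d2 - D\<bar> \<le> r2 \<longrightarrow> ER mu d1 d2 \<ge> \<eta>)"
proof -
  obtain B C where C: "C \<ge> 0" and h: "\<And>mu d1 d2. mu \<in> {a..b} \<Longrightarrow> \<bar>d1 - D\<bar> \<le> r1 \<Longrightarrow> \<bar>d2 - D\<bar> \<le> r1 \<Longrightarrow>
      \<bar>ER mu d1 d2 - ER mu D D\<bar> \<le> C * (\<bar>d1 - D\<bar> + \<bar>d2 - D\<bar>)"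
    using goodE[OF g_ER] by metis
  define r2 where "r2 = min r1 (\<eta> / (2 * C + 1))"
  show ?thesis
  proof (intro exI[of _ r2] conjI ballI allI impI)
    show "r2 > 0" unfolding r2_def using r1_props eta_pos C by simp
    show "r2 \<le> r1" unfolding r2_def by simp
    fix mu d1 d2 assume K: "mu \<in> {a..b}" "\<bar>d1 - D\<bar> \<le> r2" "\<bar>d2 - D\<bar> \<le> r2"
    have K1: "\<bar>d1 - D\<bar> \<le> r1" "\<bar>d2 - D\<bar> \<le> r1" using K unfolding r2_def by auto
    have "C * (\<bar>d1 - D\<bar> + \<bar>d2 - D\<bar>) \<le> C * (2 * r2)" using K C by (intro mult_left_mono) auto
    also have "\<dots> \<le> C * (2 * (\<eta> / (2 * C + 1)))" using C unfolding r2_def by (intro mult_left_mono) auto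
    also have "\<dots> = \<eta> * (2 * C / (2 * C + 1))" using C by (simp add: field_simps)
    also have "\<dots> \<le> \<eta> * 1" using C eta_pos by (intro mult_left_mono) auto
    finally have "C * (\<bar>d1 - D\<bar> + \<bar>d2 - D\<bar>) \<le> \<eta>" by simp
    moreover have "ER mu D D \<ge> 2 * \<eta>" using ER_base[OF K(1)] dB_lb K(1) by simp
    ultimately show "ER mu d1 d2 \<ge> \<eta>" using h[OF K(1) K1] by linarith
  qed
qed

definition "r2 = (SOME r2. r2 > 0 \<and> r2 \<le> r1 \<and> (\<forall>mu\<in>{a..b}. \<forall>d1 d2. \<bar>d1 - D\<bar> \<le> r2 \<longrightarrow> \<bar>d2 - D\<bar> \<le> r2 \<longrightarrow> ER mu d1 d2 \<ge> \<eta>))"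

lemma r2_props: "r2 > 0" "r2 \<le> r1"
  "\<And>mu d1 d2. mu \<in> {a..b} \<Longrightarrow> \<bar>d1 - D\<bar> \<le> r2 \<Longrightarrow> \<bar>d2 - D\<bar> \<le> r2 \<Longrightarrow> ER mu d1 d2 \<ge> \<eta>"
  using someI_ex[OF r2_ex] unfolding r2_def[symmetric] by blast+

lemma r2_facts: "0 \<le> r2" "r2 \<le> rPc" "r2 \<le> D / 2"
  using r2_props r1_facts by auto

lemma WR_lb: "mu \<in> {a..b} \<Longrightarrow> \<bar>d1 - D\<bar> \<le> r2 \<Longrightarrow> \<bar>d2 - D\<bar> \<le> r2 \<Longrightarrow> WR mu d1 d2 \<ge> \<eta> / 4"
  using quad_pos[of "bR mu d1 d2" "cR mu d1 d2" "aR mu d1 d2"] r2_props(3)[of mu d1 d2]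
  unfolding WR_def ER_def by (smt (verit) divide_right_mono)

lemma g_Phi: "good {a..b} r2 D Phi"
proof -
  have gaR: "good {a..b} r2 D aR" using good_mono[OF g_aR r2_props(2)] .
  have gWR: "good {a..b} r2 D WR"
    unfolding WR_def[abs_def] bR_def cR_def
    by (intro gbasic[OF a_pos r2_facts] gp1[OF a_pos r2_facts] gp2[OF a_pos r2_facts] gaR good_sq r2_facts(1))
  have gi: "good {a..b} r2 D (\<lambda>mu d1 d2. 1 / WR mu d1 d2)"
  proof (rule good_inverse[OF gWR r2_facts(1), of "\<eta> / 4"])
    show "0 < \<eta> / 4" using eta_pos by simp
    fix mu d1 d2 assume "mu \<in> {a..b}" "\<bar>d1 - D\<bar> \<le> r2" "\<bar>d2 - D\<bar> \<le> r2"
    then show "\<eta> / 4 \<le> \<bar>WR mu d1 d2\<bar>" using WR_lb by fastforce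
  qed
  show ?thesis unfolding Phi_def[abs_def]
    by (intro gbasic[OF a_pos r2_facts] gp0d[OF a_pos r2_facts] gp1d[OF a_pos r2_facts]
        gp2d[OF a_pos r2_facts] gaR gi good_sq r2_facts(1))
qed


lemma fac_K:
  assumes K: "mu \<in> {a..b}" "\<bar>d1 - D\<bar> \<le> r2" "\<bar>d2 - D\<bar> \<le> r2"
  shows "multM (aR mu d1 d2, bR mu d1 d2, cR mu d1 d2) = (p0 mu d1 d2, p1 mu d1 d2, p2 mu d1 d2)"
    "aR mu d1 d2 < 0" "(cR mu d1 d2) ^ 2 - 4 * bR mu d1 d2 < 0"
proof -
  have K1: "\<bar>d1 - D\<bar> \<le> r1" "\<bar>d2 - D\<bar> \<le> r1" using K r2_props(2) by auto
  have q: "qf mu d1 d2 (aR mu d1 d2) = 0" and neg: "aR mu d1 d2 \<le> - D / 2" using aR_props[OF K(1) K1] by auto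
  show "multM (aR mu d1 d2, bR mu d1 d2, cR mu d1 d2) = (p0 mu d1 d2, p1 mu d1 d2, p2 mu d1 d2)"
    using q unfolding multM_def bR_def cR_def qf_def by (simp add: algebra_simps power2_eq_square power3_eq_cube)
  show "aR mu d1 d2 < 0" using neg D_pos by simp
  show "(cR mu d1 d2) ^ 2 - 4 * bR mu d1 d2 < 0" using r2_props(3)[OF K] eta_pos unfolding ER_def by simp
qed

lemma gam_K:
  assumes K: "mu \<in> {a..b}" "\<bar>d1 - D\<bar> \<le> r2" "\<bar>d2 - D\<bar> \<le> r2"
  shows "gam f1 f1d f2 f2d g1 g2 D d1 d2 mu = cR mu d1 d2"
    "\<exists>a b c. a < 0 \<and> c ^ 2 - 4 * b < 0 \<and>
        multM (a, b, c) = charcoeffs (Jac f1 f1d f2 f2d g1 g2 D d1 d2 (E2 f1 f2 g1 g2 D mu d1 d2))"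
proof -
  have cc: "charcoeffs (Jac f1 f1d f2 f2d g1 g2 D d1 d2 (E2 f1 f2 g1 g2 D mu d1 d2))
           = (p0 mu d1 d2, p1 mu d1 d2, p2 mu d1 d2)"
    using charcoeffs_eq K r2_facts by auto
  show "gam f1 f1d f2 f2d g1 g2 D d1 d2 mu = cR mu d1 d2"
    unfolding gam_def cc by (rule gamma_fac_eq[OF fac_K(2,3,1)[OF K]])
  show "\<exists>a b c. a < 0 \<and> c ^ 2 - 4 * b < 0 \<and>
        multM (a, b, c) = charcoeffs (Jac f1 f1d f2 f2d g1 g2 D d1 d2 (E2 f1 f2 g1 g2 D mu d1 d2))"
    unfolding cc using fac_K[OF K] by blast
qed

lemma Afun_gam:
  assumes K: "mu \<in> {a..b}"
  shows "Afun f1 f1d f2 f2d g1 g2 D mu = gam f1 f1d f2 f2d g1 g2 D D D mu"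
proof -
  have cc: "charcoeffs (Jac f1 f1d f2 f2d g1 g2 D D D (E2 f1 f2 g1 g2 D mu D D))
           = (p0 mu D D, p1 mu D D, p2 mu D D)"
    using charcoeffs_eq rPc_props(1) by simp
  have "(Afun f1 f1d f2 f2d g1 g2 D mu) ^ 2 - 4 * beta0 mu < 0"
    using dB_lb K eta_pos unfolding dB_def by force
  then show ?thesis unfolding gam_def cc
    using gamma_fac_eq[of "- D" "Afun f1 f1d f2 f2d g1 g2 D mu" "beta0 mu", OF _ _ base_multM[OF in_ab_pos[OF K]]]
      D_pos by simp
qed

lemma gam_deriv:
  assumes mu: "mu \<in> {a<..<b}" and d: "\<bar>d1 - D\<bar> \<le> r2" "\<bar>d2 - D\<bar> \<le> r2"
  shows "((\<lambda>m. gam f1 f1d f2 f2d g1 g2 D d1 d2 m) has_real_derivative Phi mu d1 d2) (at mu)"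
proof -
  have S: "open {a<..<b}" "mu \<in> {a<..<b}" using mu by auto
  have mu0: "mu > 0" using mu a_pos by simp
  have d2r: "\<bar>d2 - D\<bar> \<le> rPc" and d2nz: "d2 \<noteq> 0" using d r2_facts D_pos by auto
  have fac: "\<forall>x\<in>{a<..<b}. multM (aR x d1 d2, bR x d1 d2, cR x d1 d2) = (p0 x d1 d2, p1 x d1 d2, p2 x d1 d2)"
    using fac_K(1) d by auto
  have disc: "\<forall>x\<in>{a<..<b}. 4 * bR x d1 d2 - (cR x d1 d2) ^ 2 \<ge> \<eta>"
    using r2_props(3) d unfolding ER_def by auto
  have da: "((\<lambda>m. aR m d1 d2) has_real_derivative
      (p0d mu d1 d2 + p1d mu d1 d2 * aR mu d1 d2 + p2d mu d1 d2 * (aR mu d1 d2) ^ 2) / WR mu d1 d2) (at mu)"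
    unfolding WR_def
    by (rule root_deriv[OF S fac disc eta_pos dp0[OF d2r mu0 d2nz] dp1[OF d2r mu0 d2nz] dp2[OF d2r mu0 d2nz]])
  have dc: "((\<lambda>m. cR m d1 d2) has_real_derivative Phi mu d1 d2) (at mu)"
    unfolding cR_def Phi_def using DERIV_diff[OF dp2[OF d2r mu0 d2nz] da] by simp
  show ?thesis
    by (rule has_field_derivative_transform_within_open[OF dc S]) (use gam_K(1) d in auto)
qed

end


theorem main_result:
  "\<exists>\<delta>>0. \<exists>\<Delta> :: (real \<times> real) set. open \<Delta> \<and> (D, D) \<in> \<Delta> \<and>
     (\<exists>C. \<forall>mu \<in> {muc2 - \<delta> .. muc2 + \<delta>}. \<forall>D1 D2. (D1, D2) \<in> \<Delta> \<longrightarrow>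
        (\<exists>a b c. a < 0 \<and> c ^ 2 - 4 * b < 0 \<and>
            multM (a, b, c) = charcoeffs (Jac f1 f1d f2 f2d g1 g2 D D1 D2
                                             (E2 f1 f2 g1 g2 D mu D1 D2))) \<and>
        (\<lambda>m. gam f1 f1d f2 f2d g1 g2 D D1 D2 m) differentiable (at mu) \<and>
        \<bar>deriv (\<lambda>m. gam f1 f1d f2 f2d g1 g2 D D1 D2 m) mu
           - deriv (Afun f1 f1d f2 f2d g1 g2 D) mu\<bar>
          \<le> C * norm ((D1, D2) - (D, D)))"
proof -
  have muc2_gt': "muc2 > muc1v" using muc2_gt muc1v_def by simp
  have muc2_pos: "muc2 > 0" using muc2_gt' muc1v_pos by simp
  define e where "e = dB muc2 / 2"
  have e_pos: "e > 0" using dB_muc2 e_def by simp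
  have "(dB \<longlongrightarrow> dB muc2) (at muc2)" using dB_cont[OF muc2_pos] by (simp add: isCont_def)
  then obtain \<delta>1 where \<delta>1: "\<delta>1 > 0" "\<And>x. x \<noteq> muc2 \<and> norm (x - muc2) < \<delta>1 \<Longrightarrow> norm (dB x - dB muc2) < e"
    unfolding LIM_eq using e_pos by blast
  define m where "m = min \<delta>1 (muc2 - muc1v)"
  have m: "m > 0" "m \<le> \<delta>1" "m \<le> muc2 - muc1v" unfolding m_def using \<delta>1 muc2_gt' by auto
  define \<delta> where "\<delta> = m / 3"
  have \<delta>_pos: "\<delta> > 0" unfolding \<delta>_def using m by simp
  define a b \<eta> where "a = muc2 - 2 * \<delta>" and "b = muc2 + 2 * \<delta>" and "\<eta> = dB muc2 / 4"
  have ab_gt: "a > muc1v"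
  proof -
    show ?thesis unfolding a_def \<delta>_def using m by linarith
  qed
  have eta_pos: "\<eta> > 0" unfolding \<eta>_def using dB_muc2 by simp
  have dB_lb: "\<forall>mu\<in>{a..b}. dB mu \<ge> 2 * \<eta>"
  proof
    fix mu assume mu: "mu \<in> {a..b}"
    show "dB mu \<ge> 2 * \<eta>"
    proof (cases "mu = muc2")
      case True then show ?thesis unfolding \<eta>_def using dB_muc2 by simp
    next
      case False
      have "\<bar>mu - muc2\<bar> \<le> 2 * \<delta>" using mu unfolding a_def b_def by auto
      also have "\<dots> < \<delta>1" unfolding \<delta>_def using m by linarith
      finally have "\<bar>dB mu - dB muc2\<bar> < e" using \<delta>1(2)[of mu] False by simp
      then show ?thesis unfolding e_def \<eta>_def by linarith
    qed
  qed
  note ctx = ab_gt dB_lb eta_pos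
  define r where "r = r2 a b \<eta>"
  have r_pos: "r > 0" using r2_props(1)[OF ctx] r_def by simp
  obtain BP CP where CP: "CP \<ge> 0" and hP: "\<And>mu d1 d2. mu \<in> {a..b} \<Longrightarrow> \<bar>d1 - D\<bar> \<le> r \<Longrightarrow> \<bar>d2 - D\<bar> \<le> r \<Longrightarrow>
      \<bar>Phi mu d1 d2 - Phi mu D D\<bar> \<le> CP * (\<bar>d1 - D\<bar> + \<bar>d2 - D\<bar>)"
    using goodE[OF g_Phi[OF ctx]] unfolding r_def by metis
  define \<Delta> where "\<Delta> = {D - r<..<D + r} \<times> {D - r<..<D + r}"
  show ?thesis
  proof (rule exI[of _ \<delta>], rule conjI[OF \<delta>_pos], rule exI[of _ \<Delta>], intro conjI)
    show "open \<Delta>" unfolding \<Delta>_def by (intro open_Times open_greaterThanLessThan)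
    show "(D, D) \<in> \<Delta>" unfolding \<Delta>_def using r_pos by simp
    show "\<exists>C. \<forall>mu \<in> {muc2 - \<delta> .. muc2 + \<delta>}. \<forall>D1 D2. (D1, D2) \<in> \<Delta> \<longrightarrow>
        (\<exists>a b c. a < 0 \<and> c ^ 2 - 4 * b < 0 \<and>
            multM (a, b, c) = charcoeffs (Jac f1 f1d f2 f2d g1 g2 D D1 D2
                                             (E2 f1 f2 g1 g2 D mu D1 D2))) \<and>
        (\<lambda>m. gam f1 f1d f2 f2d g1 g2 D D1 D2 m) differentiable (at mu) \<and>
        \<bar>deriv (\<lambda>m. gam f1 f1d f2 f2d g1 g2 D D1 D2 m) mu
           - deriv (Afun f1 f1d f2 f2d g1 g2 D) mu\<bar>
          \<le> C * norm ((D1, D2) - (D, D))"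
    proof (rule exI[of _ "2 * CP"], intro ballI allI impI conjI)
    fix mu D1 D2 assume mu: "mu \<in> {muc2 - \<delta>..muc2 + \<delta>}" and dd: "(D1, D2) \<in> \<Delta>"
    have d: "\<bar>D1 - D\<bar> \<le> r" "\<bar>D2 - D\<bar> \<le> r" using dd unfolding \<Delta>_def by auto
    have d0: "\<bar>D - D\<bar> \<le> r" using r_pos by simp
    have muS: "mu \<in> {a<..<b}" using mu \<delta>_pos unfolding a_def b_def by auto
    then have muK: "mu \<in> {a..b}" by auto
    show "\<exists>a b c. a < 0 \<and> c\<^sup>2 - 4 * b < 0 \<and>
        multM (a, b, c) = charcoeffs (Jac f1 f1d f2 f2d g1 g2 D D1 D2 (E2 f1 f2 g1 g2 D mu D1 D2))"
      using gam_K(2)[OF ctx muK] d unfolding r_def by blast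
    have dg: "((\<lambda>m. gam f1 f1d f2 f2d g1 g2 D D1 D2 m) has_real_derivative Phi mu D1 D2) (at mu)"
      using gam_deriv[OF ctx muS] d unfolding r_def by blast
    then show "(\<lambda>m. gam f1 f1d f2 f2d g1 g2 D D1 D2 m) differentiable (at mu)"
      unfolding differentiable_def using has_field_derivative_imp_has_derivative by blast
    have dA0: "((\<lambda>m. gam f1 f1d f2 f2d g1 g2 D D D m) has_real_derivative Phi mu D D) (at mu)"
      using gam_deriv[OF ctx muS] d0 unfolding r_def by blast
    have dA: "(Afun f1 f1d f2 f2d g1 g2 D has_real_derivative Phi mu D D) (at mu)"
      by (rule has_field_derivative_transform_within_open[OF dA0, of "{a<..<b}"])
         (use muS Afun_gam[OF ctx] in auto)
    have "\<bar>deriv (\<lambda>m. gam f1 f1d f2 f2d g1 g2 D D1 D2 m) mu - deriv (Afun f1 f1d f2 f2d g1 g2 D) mu\<bar>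
        = \<bar>Phi mu D1 D2 - Phi mu D D\<bar>"
      using DERIV_imp_deriv[OF dg] DERIV_imp_deriv[OF dA] by simp
    also have "\<dots> \<le> CP * (\<bar>D1 - D\<bar> + \<bar>D2 - D\<bar>)" using hP[OF muK d] .
    also have "\<dots> \<le> CP * (2 * norm ((D1, D2) - (D, D)))"
    proof (rule mult_left_mono[OF _ CP])
      have "\<bar>D1 - D\<bar> \<le> norm ((D1, D2) - (D, D))" using norm_fst_le[of "D1 - D" "D2 - D"] by simp
      moreover have "\<bar>D2 - D\<bar> \<le> norm ((D1, D2) - (D, D))" using norm_snd_le[of "D2 - D" "D1 - D"] by simp
      ultimately show "\<bar>D1 - D\<bar> + \<bar>D2 - D\<bar> \<le> 2 * norm ((D1, D2) - (D, D))" by simp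
    qed
    finally show "\<bar>deriv (\<lambda>m. gam f1 f1d f2 f2d g1 g2 D D1 D2 m) mu - deriv (Afun f1 f1d f2 f2d g1 g2 D) mu\<bar>
        \<le> 2 * CP * norm ((D1, D2) - (D, D))" by simp
  qed
  qed
qed

end

theorem lemma3p7:
  fixes f1 f1d f1dd f1ddd f2 f2d f2dd :: "real \<Rightarrow> real"
    and D g1 g2 muc2 :: real
  assumes D_pos: "D > 0" and g1_pos: "g1 > 0" and g2_pos: "g2 > 0"
    and f1_nonneg: "\<forall>x\<ge>0. f1 x \<ge> 0" and f2_nonneg: "\<forall>x\<ge>0. f2 x \<ge> 0"
    and f1_bdd: "bounded (f1 ` {0..})" and f2_bdd: "bounded (f2 ` {0..})"
    and f1_0: "f1 0 = 0" and f2_0: "f2 0 = 0"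
    and f1_deriv: "\<forall>x\<ge>0. (f1 has_real_derivative f1d x) (at x within {0..})"
    and f2_deriv: "\<forall>x\<ge>0. (f2 has_real_derivative f2d x) (at x within {0..})"
    and f1d_pos: "\<forall>x\<ge>0. f1d x > 0" and f2d_pos: "\<forall>x\<ge>0. f2d x > 0"
    and f1_lim: "\<exists>L1. (f1 \<longlongrightarrow> L1) at_top \<and>
                   (\<exists>e>0. \<forall>d. \<bar>d - D\<bar> < e \<longrightarrow> L1 > d / g1)"
    and f2_lim: "\<exists>L2. (f2 \<longlongrightarrow> L2) at_top \<and>
                   (\<exists>e>0. \<forall>d. \<bar>d - D\<bar> < e \<longrightarrow> L2 > d / g2)"
    and f1_C3: "\<forall>x\<ge>0. (f1d has_real_derivative f1dd x) (at x within {0..})"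
               "\<forall>x\<ge>0. (f1dd has_real_derivative f1ddd x) (at x within {0..})"
               "continuous_on {0..} f1ddd"
    and f2_C2: "\<forall>x\<ge>0. (f2d has_real_derivative f2dd x) (at x within {0..})"
               "continuous_on {0..} f2dd"
    and hyp: "D / (g2 * lam f2 g2 D) > f2d (lam f2 g2 D)"
    and muc2_gt: "muc2 > muc1 f1 f2 g1 g2 D D D"
    and muc2_zero: "Afun f1 f1d f2 f2d g1 g2 D muc2 = 0"
  shows "\<exists>\<delta>>0. \<exists>\<Delta> :: (real \<times> real) set. open \<Delta> \<and> (D, D) \<in> \<Delta> \<and>
           (\<exists>C. \<forall>mu \<in> {muc2 - \<delta> .. muc2 + \<delta>}. \<forall>D1 D2. (D1, D2) \<in> \<Delta> \<longrightarrow>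
              (\<exists>a b c. a < 0 \<and> c ^ 2 - 4 * b < 0 \<and>
                  multM (a, b, c) = charcoeffs (Jac f1 f1d f2 f2d g1 g2 D D1 D2
                                                   (E2 f1 f2 g1 g2 D mu D1 D2))) \<and>
              (\<lambda>m. gam f1 f1d f2 f2d g1 g2 D D1 D2 m) differentiable (at mu) \<and>
              \<bar>deriv (\<lambda>m. gam f1 f1d f2 f2d g1 g2 D D1 D2 m) mu
                 - deriv (Afun f1 f1d f2 f2d g1 g2 D) mu\<bar>
                \<le> C * norm ((D1, D2) - (D, D)))"
  proof -
  have L: "sysl f1 f1d f1dd f1ddd f2 f2d f2dd D g1 g2 muc2"
    unfolding sysl_def using D_pos g1_pos g2_pos f1_bdd f1_0 f2_0 f1_deriv f2_deriv f1d_pos f2d_pos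
      f1_lim f2_lim f1_C3 f2_C2 hyp muc2_gt muc2_zero by blast
  show ?thesis using sysl.main_result[OF L] .
qed

end
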